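(* Let $\mathcal P$ and $\mathrm{conv}(\mathcal P)$ be as in the context. Let $\mathcal S\subseteq[0,\min\{L-1,T-3,\lfloor(\overline C-\overline V)/V\rfloor\}]_{\mathbb Z}$ and let $\eta$ be a real number with $0\le\eta\le\min\{L-1,(\overline C-\overline V)/V\}$. For any $t\in[1,T-1]_{\mathbb Z}$ with $t\ge s+2$ for all $s\in\mathcal S$, the inequality $$x_t\le(\overline C-\eta V)y_t+\eta Vy_{t+1}-\sum_{s\in\mathcal S}(\overline C-\overline V-sV)(y_{t-s}-y_{t-s-1})\qquad(\ast)$$ is valid for $\mathrm{conv}(\mathcal P)$. For any $t\in[2,T]_{\mathbb Z}$ with $t\le T-s-1$ for all $s\in\mathcal S$, the inequality $$x_t\le(\overline C-\eta V)y_t+\eta Vy_{t-1}-\sum_{s\in\mathcal S}(\overline C-\overline V-sV)(y_{t+s}-y_{t+s+1})\qquad(\ast\ast)$$ is valid for $\mathrm{conv}(\mathcal P)$. Furthermore, $(\ast)$ and $(\ast\ast)$ (for these ranges of $t$) are facet-defining for $\mathrm{conv}(\mathcal P)$ when $\eta\in\{0,(\overline C-\overline V)/V\}$ or $\eta=L-1\in\mathcal S$.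
   Context: For integers $a,b$, $[a,b]_{\mathbb Z}=\{a,a+1,\dots,b\}$ if $a\le b$ and $\emptyset$ otherwise. Fix a positive integer $T$, positive integers $L$ (minimum up time) and $\ell$ (minimum down time), and reals $\overline C,\underline C,V,\overline V$ with $\overline C>\underline C>0$, $V>0$, $\overline V+V\le\overline C$ and $\underline C<\overline V<\underline C+V$. $\mathcal P$ is the set of $(\mathbf x,\mathbf y)=((x_1,\dots,x_T),(y_1,\dots,y_T))\in\mathbb R_+^T\times\{0,1\}^T$ satisfying: (i) $-y_{t-1}+y_t-y_k\le 0$ for all $t\in[2,T]_{\mathbb Z}$, $k\in[t,\min\{T,t+L-1\}]_{\mathbb Z}$; (ii) $y_{t-1}-y_t+y_k\le 1$ for all $t\in[2,T]_{\mathbb Z}$, $k\in[t,\min\{T,t+\ell-1\}]_{\mathbb Z}$; (iii) $-x_t+\underline C y_t\le 0$ and $x_t-\overline C y_t\le 0$ for all $t\in[1,T]_{\mathbb Z}$; (iv) $x_t-x_{t-1}\le Vy_{t-1}+\overline V(1-y_{t-1})$ for all $t\in[2,T]_{\mathbb Z}$; (v) $x_{t-1}-x_t\le Vy_t+\overline V(1-y_t)$ for all $t\in[2,T]_{\mathbb Z}$. $\mathrm{conv}(\mathcal P)\subseteq\mathbb R^{2T}$ is its convex hull. A linear inequality is valid for $\mathrm{conv}(\mathcal P)$ if all its points satisfy it, and facet-defining if moreover the set of points of $\mathrm{conv}(\mathcal P)$ satisfying it with equality has dimension $\dim\mathrm{conv}(\mathcal P)-1$. *)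

theory Defs
  imports "HOL-Analysis.Analysis"
begin

text \<open>Points of R^{2T} are pairs (x,y) of vectors in real^'n, where the coordinate
  index type 'n is identified with the time periods 1..T via a bijection iota.\<close>

definition xc :: "(nat \<Rightarrow> 'n::finite) \<Rightarrow> (real^'n) \<times> (real^'n) \<Rightarrow> nat \<Rightarrow> real" where
  "xc \<iota> p t = fst p $ \<iota> t"

definition yc :: "(nat \<Rightarrow> 'n::finite) \<Rightarrow> (real^'n) \<times> (real^'n) \<Rightarrow> nat \<Rightarrow> real" where
  "yc \<iota> p t = snd p $ \<iota> t"

definition Pset :: "(nat \<Rightarrow> 'n::finite) \<Rightarrow> nat \<Rightarrow> nat \<Rightarrow> nat \<Rightarrow> real \<Rightarrow> real \<Rightarrow> real \<Rightarrow> real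
     \<Rightarrow> ((real^'n) \<times> (real^'n)) set" where
  "Pset \<iota> T L l Cbar Cund V Vbar = {p.
     (\<forall>t\<in>{1..T}. xc \<iota> p t \<ge> 0 \<and> yc \<iota> p t \<in> {0, 1}) \<and>
     (\<forall>t\<in>{2..T}. \<forall>k\<in>{t..min T (t + L - 1)}.
        - yc \<iota> p (t - 1) + yc \<iota> p t - yc \<iota> p k \<le> 0) \<and>
     (\<forall>t\<in>{2..T}. \<forall>k\<in>{t..min T (t + l - 1)}.
        yc \<iota> p (t - 1) - yc \<iota> p t + yc \<iota> p k \<le> 1) \<and>
     (\<forall>t\<in>{1..T}. - xc \<iota> p t + Cund * yc \<iota> p t \<le> 0 \<and> xc \<iota> p t - Cbar * yc \<iota> p t \<le> 0) \<and>
     (\<forall>t\<in>{2..T}. xc \<iota> p t - xc \<iota> p (t - 1)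
        \<le> V * yc \<iota> p (t - 1) + Vbar * (1 - yc \<iota> p (t - 1))) \<and>
     (\<forall>t\<in>{2..T}. xc \<iota> p (t - 1) - xc \<iota> p t
        \<le> V * yc \<iota> p t + Vbar * (1 - yc \<iota> p t))}"

definition valid_ineq :: "'a set \<Rightarrow> ('a \<Rightarrow> real) \<Rightarrow> ('a \<Rightarrow> real) \<Rightarrow> bool" where
  "valid_ineq K lhs rhs \<longleftrightarrow> (\<forall>p\<in>K. lhs p \<le> rhs p)"

definition facet_defining :: "('a::euclidean_space) set \<Rightarrow> ('a \<Rightarrow> real) \<Rightarrow> ('a \<Rightarrow> real) \<Rightarrow> bool" where
  "facet_defining K lhs rhs \<longleftrightarrow> valid_ineq K lhs rhs \<and>
     aff_dim {p\<in>K. lhs p = rhs p} = aff_dim K - 1"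

end

theory Submission imports Defs begin

definition feasF :: "nat \<Rightarrow> nat \<Rightarrow> nat \<Rightarrow> real \<Rightarrow> real \<Rightarrow> real \<Rightarrow> real \<Rightarrow> (nat \<Rightarrow> real) \<Rightarrow> (nat \<Rightarrow> real) \<Rightarrow> bool" where
  "feasF T L l Cbar Cund V Vbar x y \<longleftrightarrow>
     (\<forall>t\<in>{1..T}. x t \<ge> 0 \<and> y t \<in> {0, 1}) \<and>
     (\<forall>t\<in>{2..T}. \<forall>k\<in>{t..min T (t + L - 1)}.
        - y (t - 1) + y t - y k \<le> 0) \<and>
     (\<forall>t\<in>{2..T}. \<forall>k\<in>{t..min T (t + l - 1)}.
        y (t - 1) - y t + y k \<le> 1) \<and>
     (\<forall>t\<in>{1..T}. - x t + Cund * y t \<le> 0 \<and> x t - Cbar * y t \<le> 0) \<and>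
     (\<forall>t\<in>{2..T}. x t - x (t - 1)
        \<le> V * y (t - 1) + Vbar * (1 - y (t - 1))) \<and>
     (\<forall>t\<in>{2..T}. x (t - 1) - x t
        \<le> V * y t + Vbar * (1 - y t))"

lemma Pset_iff: "p \<in> Pset \<iota> T L l Cbar Cund V Vbar \<longleftrightarrow> feasF T L l Cbar Cund V Vbar (xc \<iota> p) (yc \<iota> p)"
  unfolding Pset_def feasF_def by simp

locale params =
  fixes T L l :: nat and Cb Cu V Vb :: real
  assumes T0: "T > 0" and L0: "L > 0" and l0: "l > 0"
    and CbCu: "Cb > Cu" and Cu0: "Cu > 0" and V0: "V > 0" and VbV: "Vb + V \<le> Cb"
    and CuVb: "Cu < Vb" and VbCu: "Vb < Cu + V"

locale sched = params +
  fixes x y :: "nat \<Rightarrow> real"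
  assumes F: "feasF T L l Cb Cu V Vb x y"
begin

lemma F1: "t \<in> {1..T} \<Longrightarrow> x t \<ge> 0 \<and> y t \<in> {0, 1}"
  using F unfolding feasF_def by blast
lemma F2: "t \<in> {2..T} \<Longrightarrow> k \<in> {t..min T (t + L - 1)} \<Longrightarrow> - y (t - 1) + y t - y k \<le> 0"
  using F unfolding feasF_def by blast
lemma F3: "t \<in> {2..T} \<Longrightarrow> k \<in> {t..min T (t + l - 1)} \<Longrightarrow> y (t - 1) - y t + y k \<le> 1"
  using F unfolding feasF_def by blast
lemma F4: "t \<in> {1..T} \<Longrightarrow> - x t + Cu * y t \<le> 0 \<and> x t - Cb * y t \<le> 0"
  using F unfolding feasF_def by blast
lemma F5: "t \<in> {2..T} \<Longrightarrow> x t - x (t - 1) \<le> V * y (t - 1) + Vb * (1 - y (t - 1))"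
  using F unfolding feasF_def by blast
lemma F6: "t \<in> {2..T} \<Longrightarrow> x (t - 1) - x t \<le> V * y t + Vb * (1 - y t)"
  using F unfolding feasF_def by blast

lemma ybin: "1 \<le> k \<Longrightarrow> k \<le> T \<Longrightarrow> y k = 0 \<or> y k = 1"
  using F1[of k] by auto

lemma xzero: "1 \<le> k \<Longrightarrow> k \<le> T \<Longrightarrow> y k = 0 \<Longrightarrow> x k = 0"
  using F1[of k] F4[of k] by auto

lemma xleCb: "1 \<le> k \<Longrightarrow> k \<le> T \<Longrightarrow> x k \<le> Cb"
  using F4[of k] ybin[of k] CbCu Cu0 F1[of k] by auto

lemma minup:
  assumes "2 \<le> a" "a \<le> T" "y (a - 1) = 0" "y a = 1" "a \<le> k" "k \<le> T" "k \<le> a + L - 1"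
  shows "y k = 1"
proof -
  have "- y (a - 1) + y a - y k \<le> 0" using F2[of a k] assms by auto
  then have "y k \<ge> 1" using assms by simp
  then show ?thesis using ybin[of k] assms by auto
qed

lemma rampup_step:
  assumes "2 \<le> k" "k \<le> T" "y (k - 1) = 1"
  shows "x k \<le> x (k - 1) + V"
  using F5[of k] assms by auto

lemma rampup_start:
  assumes "2 \<le> k" "k \<le> T" "y (k - 1) = 0"
  shows "x k \<le> Vb"
proof -
  have "x k - x (k - 1) \<le> V * y (k - 1) + Vb * (1 - y (k - 1))" using F5[of k] assms by auto
  moreover have "x (k - 1) = 0" using xzero[of "k-1"] assms by auto
  ultimately show ?thesis using assms by simp
qed

lemma rampdown_step:
  assumes "2 \<le> k" "k \<le> T" "y k = 1"
  shows "x (k - 1) \<le> x k + V"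
  using F6[of k] assms by auto

lemma rampdown_end:
  assumes "2 \<le> k" "k \<le> T" "y k = 0"
  shows "x (k - 1) \<le> Vb"
proof -
  have "x (k - 1) - x k \<le> V * y k + Vb * (1 - y k)" using F6[of k] assms by auto
  moreover have "x k = 0" using xzero[of "k"] assms by auto
  ultimately show ?thesis using assms by simp
qed

lemma ramp_up:
  assumes "2 \<le> a" "a + j \<le> T" "y (a - 1) = 0" "\<forall>k. a \<le> k \<and> k \<le> a + j \<longrightarrow> y k = 1"
  shows "x (a + j) \<le> Vb + j * V"
  using assms
proof (induction j)
  case 0
  then show ?case using rampup_start[of a] by simp
next
  case (Suc j)
  have "x (a + j) \<le> Vb + j * V" using Suc by auto
  moreover have "x (a + Suc j) \<le> x (a + Suc j - 1) + V"
    using rampup_step[of "a + Suc j"] Suc.prems by auto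
  ultimately show ?case by (simp add: algebra_simps)
qed

lemma ramp_down:
  assumes "1 \<le> c" "c + j + 1 \<le> T" "y (c + j + 1) = 0" "\<forall>k. c \<le> k \<and> k \<le> c + j \<longrightarrow> y k = 1"
  shows "x c \<le> Vb + j * V"
  using assms
proof (induction j arbitrary: c)
  case 0
  then show ?case using rampdown_end[of "c+1"] by simp
next
  case (Suc j)
  have "x (c + 1) \<le> Vb + j * V" using Suc.IH[of "c+1"] Suc.prems by auto
  moreover have "x (c + 1 - 1) \<le> x (c + 1) + V"
    using rampdown_step[of "c + 1"] Suc.prems by auto
  ultimately show ?case by (simp add: algebra_simps)
qed

lemma startup_exists:
  assumes "1 \<le> i" "i < j" "j \<le> T" "y i = 0" "y j = 1"
  shows "\<exists>a. i < a \<and> a \<le> j \<and> y (a - 1) = 0 \<and> y a = 1"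
  using assms
proof (induction j)
  case 0 then show ?case by simp
next
  case (Suc j)
  show ?case
  proof (cases "y j = 0")
    case True then show ?thesis using Suc.prems by (intro exI[of _ "Suc j"]) auto
  next
    case False
    then have "y j = 1" using ybin[of j] Suc.prems by auto
    moreover have "i < j"
    proof (rule ccontr)
      assume "\<not> i < j" then have "i = j" using Suc.prems by auto
      then show False using Suc.prems False by auto
    qed
    ultimately obtain a where "i < a \<and> a \<le> j \<and> y (a - 1) = 0 \<and> y a = 1" using Suc by auto
    then show ?thesis by (intro exI[of _ a]) auto
  qed
qed

end

lemma sum_bound:
  fixes c d :: "nat \<Rightarrow> real"
  assumes "finite S" "\<forall>s\<in>S. c s \<ge> 0" "\<forall>s\<in>S. d s = -1 \<or> d s = 0 \<or> d s = 1"
    "\<forall>s1\<in>S. \<forall>s2\<in>S. d s1 = 1 \<longrightarrow> d s2 = 1 \<longrightarrow> s1 = s2"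
  shows "((\<forall>s\<in>S. d s \<noteq> 1) \<and> (\<Sum>s\<in>S. c s * d s) \<le> 0) \<or>
         (\<exists>s0\<in>S. d s0 = 1 \<and> (\<Sum>s\<in>S. c s * d s) \<le> c s0)"
proof (cases "\<forall>s\<in>S. d s \<noteq> 1")
  case True
  have "(\<Sum>s\<in>S. c s * d s) \<le> 0"
  proof (rule sum_nonpos)
    fix s assume "s \<in> S"
    then have "d s \<le> 0" using True assms(3) by force
    then show "c s * d s \<le> 0" using assms(2) \<open>s \<in> S\<close> by (simp add: mult_nonneg_nonpos)
  qed
  then show ?thesis using True by blast
next
  case False
  then obtain s0 where s0: "s0 \<in> S" "d s0 = 1" by blast
  have "(\<Sum>s\<in>S. c s * d s) = c s0 * d s0 + (\<Sum>s\<in>S - {s0}. c s * d s)"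
    using assms(1) s0(1) by (simp add: sum.remove)
  moreover have "(\<Sum>s\<in>S - {s0}. c s * d s) \<le> 0"
  proof (rule sum_nonpos)
    fix s assume s: "s \<in> S - {s0}"
    then have "d s \<noteq> 1" using assms(4) s0 by blast
    then have "d s \<le> 0" using s assms(3) by force
    then show "c s * d s \<le> 0" using assms(2) s by (simp add: mult_nonneg_nonpos)
  qed
  ultimately show ?thesis using s0 by auto
qed

context sched begin

lemma ystep:
  assumes "2 \<le> a" "a \<le> T" "y a - y (a - 1) = 1"
  shows "y (a - 1) = 0 \<and> y a = 1"
proof -
  have "y a = 0 \<or> y a = 1" "y (a - 1) = 0 \<or> y (a - 1) = 1" using ybin[of a] ybin[of "a - 1"] assms by auto
  then show ?thesis using assms(3) by auto
qed

lemma valid1: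
  fixes S :: "nat set" and \<eta> :: real and t :: nat
  assumes t: "1 \<le> t" "t + 1 \<le> T"
    and St: "\<forall>s\<in>S. s + 2 \<le> t" and SL: "\<forall>s\<in>S. s + 1 \<le> L"
    and Sh: "\<forall>s\<in>S. real s \<le> (Cb - Vb) / V"
    and e0: "0 \<le> \<eta>" and eL: "\<eta> \<le> real L - 1" and eh: "\<eta> \<le> (Cb - Vb) / V"
  shows "x t \<le> (Cb - \<eta> * V) * y t + \<eta> * V * y (t + 1)
               - (\<Sum>s\<in>S. (Cb - Vb - real s * V) * (y (t - s) - y (t - s - 1)))"
proof -
  define d where "d s = y (t - s) - y (t - s - 1)" for s
  define c where "c s = Cb - Vb - real s * V" for s
  have finS: "finite S" using SL by (intro finite_subset[of S "{..L}"]) auto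
  have c0: "\<forall>s\<in>S. c s \<ge> 0"
  proof
    fix s assume "s \<in> S"
    then have "real s \<le> (Cb - Vb) / V" using Sh by auto
    then have "real s * V \<le> Cb - Vb" using V0 by (simp add: pos_le_divide_eq)
    then show "c s \<ge> 0" unfolding c_def by simp
  qed
  have dvals: "\<forall>s\<in>S. d s = -1 \<or> d s = 0 \<or> d s = 1"
  proof
    fix s assume "s \<in> S"
    then have "1 \<le> t - s - 1" "t - s \<le> T" using St t by auto
    then have "y (t - s) = 0 \<or> y (t - s) = 1" "y (t - s - 1) = 0 \<or> y (t - s - 1) = 1"
      using ybin[of "t - s"] ybin[of "t - s - 1"] by auto
    then show "d s = -1 \<or> d s = 0 \<or> d s = 1" unfolding d_def by auto
  qed
  have U1: "\<forall>k. t - s \<le> k \<and> k \<le> t \<longrightarrow> y k = 1" if "s \<in> S" "d s = 1" for s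
  proof (intro allI impI)
    fix k assume k: "t - s \<le> k \<and> k \<le> t"
    have st: "s + 2 \<le> t" "s + 1 \<le> L" using that St SL by auto
    have "y (t - s - 1) = 0 \<and> y (t - s) = 1"
      using that(2) ystep[of "t - s"] st t unfolding d_def by auto
    then show "y k = 1" using minup[of "t - s" k] st t k by (auto simp: diff_diff_add)
  qed
  have uniq: "\<forall>s1\<in>S. \<forall>s2\<in>S. d s1 = 1 \<longrightarrow> d s2 = 1 \<longrightarrow> s1 = s2"
  proof (intro ballI impI, rule ccontr)
    fix s1 s2 assume a: "s1 \<in> S" "s2 \<in> S" "d s1 = 1" "d s2 = 1" "s1 \<noteq> s2"
    have ne: "s1 < s2 \<or> s2 < s1" using a(5) by auto
    have gen: False if "u \<in> S" "v \<in> S" "d u = 1" "d v = 1" "u < v" for u v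
    proof -
      have "y (t - u - 1) = 1" using U1[OF that(2,4)] that(5) St that(1) by auto
      moreover have "y (t - u - 1) = 0"
        using that(3) ystep[of "t - u"] St t that(1) unfolding d_def by force
      ultimately show False by simp
    qed
    show False using ne gen a by blast
  qed
  have SB: "((\<forall>s\<in>S. d s \<noteq> 1) \<and> (\<Sum>s\<in>S. c s * d s) \<le> 0) \<or>
         (\<exists>s0\<in>S. d s0 = 1 \<and> (\<Sum>s\<in>S. c s * d s) \<le> c s0)"
    by (rule sum_bound[OF finS c0 dvals uniq])
  have sumeq: "(\<Sum>s\<in>S. (Cb - Vb - real s * V) * (y (t - s) - y (t - s - 1))) = (\<Sum>s\<in>S. c s * d s)"
    unfolding c_def d_def by simp
  have eV: "\<eta> * V \<le> Cb - Vb" using eh V0 by (simp add: pos_le_divide_eq)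
  have eV0: "0 \<le> \<eta> * V" using e0 V0 by simp
  have yt: "y t = 0 \<or> y t = 1" using ybin[of t] t by auto
  have yt1: "y (t+1) = 0 \<or> y (t+1) = 1" using ybin[of "t+1"] t by auto
  have main: "x t \<le> (Cb - \<eta> * V) * y t + \<eta> * V * y (t + 1) - (\<Sum>s\<in>S. c s * d s)"
  proof (cases "y t = 0")
    case True
    then have xt: "x t = 0" using xzero[of t] t by auto
    have "\<forall>s\<in>S. d s \<noteq> 1" using U1 True t by fastforce
    then have "(\<Sum>s\<in>S. c s * d s) \<le> 0" using SB by blast
    moreover have "0 \<le> \<eta> * V * y (t + 1)" using yt1 eV0 by auto
    ultimately show ?thesis using xt True by simp
  next
    case False
    then have y1: "y t = 1" using yt by simp
    show ?thesis
    proof (cases "y (t + 1) = 1")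
      case True
      show ?thesis
      proof (cases "\<forall>s\<in>S. d s \<noteq> 1")
        case True
        then have "(\<Sum>s\<in>S. c s * d s) \<le> 0" using SB by blast
        then show ?thesis using y1 \<open>y (t+1) = 1\<close> xleCb[of t] t by (simp add: algebra_simps)
      next
        case False
        then obtain s0 where s0: "s0 \<in> S" "d s0 = 1" "(\<Sum>s\<in>S. c s * d s) \<le> c s0"
          using SB by blast
        have st: "s0 + 2 \<le> t" using St s0 by auto
        have y0: "y (t - s0 - 1) = 0"
          using s0(2) ystep[of "t - s0"] st t unfolding d_def by auto
        have "x (t - s0 + s0) \<le> Vb + s0 * V"
          using ramp_up[of "t - s0" s0] U1[OF s0(1,2)] st t y0 by (auto simp: diff_diff_add)
        then have "x t \<le> Vb + s0 * V" using st by simp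
        then show ?thesis using y1 \<open>y (t+1) = 1\<close> s0(3) unfolding c_def by (simp add: algebra_simps)
      qed
    next
      case False
      then have y2: "y (t + 1) = 0" using yt1 by simp
      have xt: "x t \<le> Vb" using rampdown_end[of "t+1"] y2 t by auto
      show ?thesis
      proof (cases "\<forall>s\<in>S. d s \<noteq> 1")
        case True
        then have "(\<Sum>s\<in>S. c s * d s) \<le> 0" using SB by blast
        then show ?thesis using y1 y2 xt eV by (simp add: algebra_simps)
      next
        case False
        then obtain s0 where s0: "s0 \<in> S" "d s0 = 1" "(\<Sum>s\<in>S. c s * d s) \<le> c s0"
          using SB by blast
        have st: "s0 + 2 \<le> t" "s0 + 1 \<le> L" using St SL s0 by auto
        have y0: "y (t - s0 - 1) = 0" "y (t - s0) = 1"
          using s0(2) ystep[of "t - s0"] st t unfolding d_def by auto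
        have "\<not> (t + 1 \<le> t - s0 + L - 1)"
        proof
          assume "t + 1 \<le> t - s0 + L - 1"
          then have "y (t+1) = 1" using minup[of "t - s0" "t+1"] y0 st t by (auto simp: diff_diff_add)
          then show False using y2 by simp
        qed
        then have "s0 + 1 = L" using st by auto
        then have "real s0 = real L - 1" by auto
        then have "\<eta> \<le> real s0" using eL by simp
        then have "\<eta> * V \<le> real s0 * V" using V0 by (simp add: mult_right_mono)
        then show ?thesis using y1 y2 xt s0(3) unfolding c_def by (simp add: algebra_simps)
      qed
    qed
  qed
  show ?thesis unfolding sumeq by (rule main)
qed

end

context sched begin

lemma ystepd:
  assumes "1 \<le> a" "a + 1 \<le> T" "y a - y (a + 1) = 1"
  shows "y a = 1 \<and> y (a + 1) = 0"
proof -
  have "y a = 0 \<or> y a = 1" "y (a + 1) = 0 \<or> y (a + 1) = 1" using ybin[of a] ybin[of "a + 1"] assms by auto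
  then show ?thesis using assms(3) by auto
qed

lemma valid2:
  fixes S :: "nat set" and \<eta> :: real and t :: nat
  assumes t: "2 \<le> t" "t \<le> T"
    and St: "\<forall>s\<in>S. t + s + 1 \<le> T" and SL: "\<forall>s\<in>S. s + 1 \<le> L"
    and Sh: "\<forall>s\<in>S. real s \<le> (Cb - Vb) / V"
    and e0: "0 \<le> \<eta>" and eL: "\<eta> \<le> real L - 1" and eh: "\<eta> \<le> (Cb - Vb) / V"
  shows "x t \<le> (Cb - \<eta> * V) * y t + \<eta> * V * y (t - 1)
               - (\<Sum>s\<in>S. (Cb - Vb - real s * V) * (y (t + s) - y (t + s + 1)))"
proof -
  define d where "d s = y (t + s) - y (t + s + 1)" for s
  define c where "c s = Cb - Vb - real s * V" for s
  have finS: "finite S" using SL by (intro finite_subset[of S "{..L}"]) auto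
  have c0: "\<forall>s\<in>S. c s \<ge> 0"
  proof
    fix s assume "s \<in> S"
    then have "real s \<le> (Cb - Vb) / V" using Sh by auto
    then have "real s * V \<le> Cb - Vb" using V0 by (simp add: pos_le_divide_eq)
    then show "c s \<ge> 0" unfolding c_def by simp
  qed
  have dvals: "\<forall>s\<in>S. d s = -1 \<or> d s = 0 \<or> d s = 1"
  proof
    fix s assume "s \<in> S"
    then have "1 \<le> t + s" "t + s + 1 \<le> T" using St t by auto
    then have "y (t + s) = 0 \<or> y (t + s) = 1" "y (t + s + 1) = 0 \<or> y (t + s + 1) = 1"
      using ybin[of "t + s"] ybin[of "t + s + 1"] by auto
    then show "d s = -1 \<or> d s = 0 \<or> d s = 1" unfolding d_def by auto
  qed
  have W1: "\<forall>k. t \<le> k \<and> k \<le> t + s \<longrightarrow> y k = 1" if "s \<in> S" "d s = 1" for s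
  proof (intro allI impI)
    fix k assume k: "t \<le> k \<and> k \<le> t + s"
    have st: "t + s + 1 \<le> T" "s + 1 \<le> L" using that St SL by auto
    have ys: "y (t + s) = 1" "y (t + s + 1) = 0"
      using that(2) ystepd[of "t + s"] st t unfolding d_def by auto
    show "y k = 1"
    proof (rule ccontr)
      assume "y k \<noteq> 1"
      then have yk: "y k = 0" using ybin[of k] k t st by auto
      then have "k < t + s" using ys k by (cases "k = t + s") auto
      then obtain a where a: "k < a" "a \<le> t + s" "y (a - 1) = 0" "y a = 1"
        using startup_exists[of k "t + s"] yk ys k t st by auto
      have "y (t + s + 1) = 1" using minup[of a "t + s + 1"] a k t st by auto
      then show False using ys by simp
    qed
  qed
  have uniq: "\<forall>s1\<in>S. \<forall>s2\<in>S. d s1 = 1 \<longrightarrow> d s2 = 1 \<longrightarrow> s1 = s2"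
  proof (intro ballI impI, rule ccontr)
    fix s1 s2 assume a: "s1 \<in> S" "s2 \<in> S" "d s1 = 1" "d s2 = 1" "s1 \<noteq> s2"
    have ne: "s1 < s2 \<or> s2 < s1" using a(5) by auto
    have gen: False if "u \<in> S" "v \<in> S" "d u = 1" "d v = 1" "u < v" for u v
    proof -
      have "y (t + u + 1) = 1" using W1[OF that(2,4)] that(5) by auto
      moreover have "y (t + u + 1) = 0"
        using that(3) ystepd[of "t + u"] St t that(1) unfolding d_def by force
      ultimately show False by simp
    qed
    show False using ne gen a by blast
  qed
  have SB: "((\<forall>s\<in>S. d s \<noteq> 1) \<and> (\<Sum>s\<in>S. c s * d s) \<le> 0) \<or>
         (\<exists>s0\<in>S. d s0 = 1 \<and> (\<Sum>s\<in>S. c s * d s) \<le> c s0)"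
    by (rule sum_bound[OF finS c0 dvals uniq])
  have sumeq: "(\<Sum>s\<in>S. (Cb - Vb - real s * V) * (y (t + s) - y (t + s + 1))) = (\<Sum>s\<in>S. c s * d s)"
    unfolding c_def d_def by simp
  have eV: "\<eta> * V \<le> Cb - Vb" using eh V0 by (simp add: pos_le_divide_eq)
  have eV0: "0 \<le> \<eta> * V" using e0 V0 by simp
  have yt: "y t = 0 \<or> y t = 1" using ybin[of t] t by auto
  have yt1: "y (t - 1) = 0 \<or> y (t - 1) = 1" using ybin[of "t - 1"] t by auto
  have main: "x t \<le> (Cb - \<eta> * V) * y t + \<eta> * V * y (t - 1) - (\<Sum>s\<in>S. c s * d s)"
  proof (cases "y t = 0")
    case True
    then have xt: "x t = 0" using xzero[of t] t by auto
    have "\<forall>s\<in>S. d s \<noteq> 1" using W1 True t by fastforce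
    then have "(\<Sum>s\<in>S. c s * d s) \<le> 0" using SB by blast
    moreover have "0 \<le> \<eta> * V * y (t - 1)" using yt1 eV0 by auto
    ultimately show ?thesis using xt True by simp
  next
    case False
    then have y1: "y t = 1" using yt by simp
    show ?thesis
    proof (cases "y (t - 1) = 1")
      case True
      show ?thesis
      proof (cases "\<forall>s\<in>S. d s \<noteq> 1")
        case True
        then have "(\<Sum>s\<in>S. c s * d s) \<le> 0" using SB by blast
        then show ?thesis using y1 \<open>y (t - 1) = 1\<close> xleCb[of t] t by (simp add: algebra_simps)
      next
        case False
        then obtain s0 where s0: "s0 \<in> S" "d s0 = 1" "(\<Sum>s\<in>S. c s * d s) \<le> c s0"
          using SB by blast
        have st: "t + s0 + 1 \<le> T" using St s0 by auto
        have y0: "y (t + s0 + 1) = 0"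
          using s0(2) ystepd[of "t + s0"] st t unfolding d_def by auto
        have "x t \<le> Vb + s0 * V"
          using ramp_down[of t s0] W1[OF s0(1,2)] st t y0 by auto
        then show ?thesis using y1 \<open>y (t - 1) = 1\<close> s0(3) unfolding c_def by (simp add: algebra_simps)
      qed
    next
      case False
      then have y2: "y (t - 1) = 0" using yt1 by simp
      have xt: "x t \<le> Vb" using rampup_start[of t] y2 t by auto
      show ?thesis
      proof (cases "\<forall>s\<in>S. d s \<noteq> 1")
        case True
        then have "(\<Sum>s\<in>S. c s * d s) \<le> 0" using SB by blast
        then show ?thesis using y1 y2 xt eV by (simp add: algebra_simps)
      next
        case False
        then obtain s0 where s0: "s0 \<in> S" "d s0 = 1" "(\<Sum>s\<in>S. c s * d s) \<le> c s0"
          using SB by blast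
        have st: "t + s0 + 1 \<le> T" "s0 + 1 \<le> L" using St SL s0 by auto
        have y0: "y (t + s0 + 1) = 0"
          using s0(2) ystepd[of "t + s0"] st t unfolding d_def by auto
        have "\<not> (t + s0 + 1 \<le> t + L - 1)"
        proof
          assume "t + s0 + 1 \<le> t + L - 1"
          then have "y (t + s0 + 1) = 1" using minup[of t "t + s0 + 1"] y1 y2 st t by auto
          then show False using y0 by simp
        qed
        then have "s0 + 1 = L" using st by auto
        then have "real s0 = real L - 1" by auto
        then have "\<eta> \<le> real s0" using eL by simp
        then have "\<eta> * V \<le> real s0 * V" using V0 by (simp add: mult_right_mono)
        then show ?thesis using y1 y2 xt s0(3) unfolding c_def by (simp add: algebra_simps)
      qed
    qed
  qed
  show ?thesis unfolding sumeq by (rule main)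
qed

end

definition ind :: "nat \<Rightarrow> nat \<Rightarrow> nat \<Rightarrow> real" where
  "ind a b k = (if a \<le> k \<and> k \<le> b then 1 else 0)"

context params begin

lemma Vb0: "Vb > 0" using Cu0 CuVb by simp

lemma interval_feas:
  fixes a b :: nat and x :: "nat \<Rightarrow> real"
  assumes ab: "1 \<le> a" "a \<le> b + 1" "b \<le> T"
    and mu: "a \<le> 1 \<or> b < a \<or> min T (a + L - 1) \<le> b"
    and xin: "\<forall>k. a \<le> k \<and> k \<le> b \<longrightarrow> Cu \<le> x k \<and> x k \<le> Cb"
    and xout: "\<forall>k. \<not> (a \<le> k \<and> k \<le> b) \<longrightarrow> x k = 0"
    and xa: "2 \<le> a \<Longrightarrow> a \<le> b \<Longrightarrow> x a \<le> Vb"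
    and xb: "b < T \<Longrightarrow> a \<le> b \<Longrightarrow> x b \<le> Vb"
    and xr: "\<forall>k. a + 1 \<le> k \<and> k \<le> b \<longrightarrow> \<bar>x k - x (k - 1)\<bar> \<le> V"
  shows "feasF T L l Cb Cu V Vb x (ind a b)"
proof -
  have c1: "\<forall>t\<in>{1..T}. x t \<ge> 0 \<and> ind a b t \<in> {0, 1}"
    using xin xout Cu0 by (auto simp: ind_def)
  have c2: "\<forall>t\<in>{2..T}. \<forall>k\<in>{t..min T (t + L - 1)}. - ind a b (t - 1) + ind a b t - ind a b k \<le> 0"
    using mu ab by (auto simp: ind_def)
  have c3: "\<forall>t\<in>{2..T}. \<forall>k\<in>{t..min T (t + l - 1)}. ind a b (t - 1) - ind a b t + ind a b k \<le> 1"
    by (auto simp: ind_def)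
  have c4: "\<forall>t\<in>{1..T}. - x t + Cu * ind a b t \<le> 0 \<and> x t - Cb * ind a b t \<le> 0"
    using xin xout by (auto simp: ind_def)
  have c5: "\<forall>t\<in>{2..T}. x t - x (t - 1) \<le> V * ind a b (t - 1) + Vb * (1 - ind a b (t - 1))"
  proof
    fix t assume t: "t \<in> {2..T}"
    show "x t - x (t - 1) \<le> V * ind a b (t - 1) + Vb * (1 - ind a b (t - 1))"
    proof (cases "a \<le> t - 1 \<and> t - 1 \<le> b")
      case True
      then have i: "ind a b (t - 1) = 1" by (simp add: ind_def)
      show ?thesis
      proof (cases "t \<le> b")
        case True
        then have "\<bar>x t - x (t - 1)\<bar> \<le> V" using xr \<open>a \<le> t - 1 \<and> t - 1 \<le> b\<close> t by auto
        then show ?thesis using i by simp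
      next
        case False
        then have "x t = 0" using xout by auto
        moreover have "x (t - 1) \<ge> Cu" using xin True by auto
        ultimately show ?thesis using i Cu0 V0 by simp
      qed
    next
      case False
      then have i: "ind a b (t - 1) = 0" by (simp add: ind_def)
      have x0: "x (t - 1) = 0" using xout False by auto
      show ?thesis
      proof (cases "a \<le> t \<and> t \<le> b")
        case True
        then have "t = a" using False t by auto
        then have "x t \<le> Vb" using xa True t by auto
        then show ?thesis using i x0 by simp
      next
        case False
        then show ?thesis using i x0 xout Vb0 by simp
      qed
    qed
  qed
  have c6: "\<forall>t\<in>{2..T}. x (t - 1) - x t \<le> V * ind a b t + Vb * (1 - ind a b t)"
  proof
    fix t assume t: "t \<in> {2..T}"
    show "x (t - 1) - x t \<le> V * ind a b t + Vb * (1 - ind a b t)"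
    proof (cases "a \<le> t \<and> t \<le> b")
      case True
      then have i: "ind a b t = 1" by (simp add: ind_def)
      show ?thesis
      proof (cases "a \<le> t - 1")
        case True
        then have "\<bar>x t - x (t - 1)\<bar> \<le> V" using xr \<open>a \<le> t \<and> t \<le> b\<close> t by auto
        then show ?thesis using i by simp
      next
        case False
        then have "x (t - 1) = 0" using xout by auto
        moreover have "x t \<ge> Cu" using xin True by auto
        ultimately show ?thesis using i Cu0 V0 by simp
      qed
    next
      case False
      then have i: "ind a b t = 0" by (simp add: ind_def)
      have x0: "x t = 0" using xout False by auto
      show ?thesis
      proof (cases "a \<le> t - 1 \<and> t - 1 \<le> b")
        case True
        then have "t - 1 = b" using False t by auto
        then have "x (t - 1) \<le> Vb" using xb True t by auto
        then show ?thesis using i x0 by simp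
      next
        case False
        then show ?thesis using i x0 xout Vb0 by simp
      qed
    qed
  qed
  show ?thesis unfolding feasF_def using c1 c2 c3 c4 c5 c6 by blast
qed

end

context params begin
lemma feasF_cong:
  assumes "\<forall>k\<in>{1..T}. x' k = x k" "\<forall>k\<in>{1..T}. y' k = y k" "feasF T L l Cb Cu V Vb x y"
  shows "feasF T L l Cb Cu V Vb x' y'"
proof -
  interpret sched T L l Cb Cu V Vb x y by (unfold_locales) (rule assms(3))
  have ex: "x' k = x k" "y' k = y k" if "1 \<le> k" "k \<le> T" for k using assms(1,2) that by auto
  have r: "1 \<le> t - 1" "t - 1 \<le> T" "1 \<le> t" "t \<le> T" if "t \<in> {2..T}" for t using that by auto
  have rk: "1 \<le> k" "k \<le> T" if "t \<in> {2..T}" "k \<in> {t..min T j}" for t k j using that by auto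
  have c1: "\<forall>t\<in>{1..T}. x' t \<ge> 0 \<and> y' t \<in> {0, 1}"
  proof
    fix t assume a: "t \<in> {1..T}"
    show "x' t \<ge> 0 \<and> y' t \<in> {0, 1}" using F1[OF a] ex[of t] a by simp
  qed
  have c2: "\<forall>t\<in>{2..T}. \<forall>k\<in>{t..min T (t + L - 1)}. - y' (t - 1) + y' t - y' k \<le> 0"
  proof (intro ballI)
    fix t k assume a: "t \<in> {2..T}" "k \<in> {t..min T (t + L - 1)}"
    show "- y' (t - 1) + y' t - y' k \<le> 0" using F2[OF a] ex r[OF a(1)] rk[OF a] by simp
  qed
  have c3: "\<forall>t\<in>{2..T}. \<forall>k\<in>{t..min T (t + l - 1)}. y' (t - 1) - y' t + y' k \<le> 1"
  proof (intro ballI)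
    fix t k assume a: "t \<in> {2..T}" "k \<in> {t..min T (t + l - 1)}"
    show "y' (t - 1) - y' t + y' k \<le> 1" using F3[OF a] ex r[OF a(1)] rk[OF a] by simp
  qed
  have c4: "\<forall>t\<in>{1..T}. - x' t + Cu * y' t \<le> 0 \<and> x' t - Cb * y' t \<le> 0"
  proof
    fix t assume a: "t \<in> {1..T}"
    show "- x' t + Cu * y' t \<le> 0 \<and> x' t - Cb * y' t \<le> 0" using F4[OF a] ex[of t] a by simp
  qed
  have c5: "\<forall>t\<in>{2..T}. x' t - x' (t - 1) \<le> V * y' (t - 1) + Vb * (1 - y' (t - 1))"
  proof
    fix t assume a: "t \<in> {2..T}"
    show "x' t - x' (t - 1) \<le> V * y' (t - 1) + Vb * (1 - y' (t - 1))" using F5[OF a] ex r[OF a] by simp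
  qed
  have c6: "\<forall>t\<in>{2..T}. x' (t - 1) - x' t \<le> V * y' t + Vb * (1 - y' t)"
  proof
    fix t assume a: "t \<in> {2..T}"
    show "x' (t - 1) - x' t \<le> V * y' t + Vb * (1 - y' t)" using F6[OF a] ex r[OF a] by simp
  qed
  show ?thesis unfolding feasF_def using c1 c2 c3 c4 c5 c6 by (intro conjI)
qed
end


definition SPX :: "((real^'n) \<times> (real^'n)) \<Rightarrow> ((real^'n) \<times> (real^'n)) set \<Rightarrow> ((real^'n) \<times> (real^'n)) set" where
  "SPX p0 X = span ((\<lambda>x. -p0 + x) ` (X - {p0}))"

lemma SPX_mem: "z \<in> X \<Longrightarrow> z - p0 \<in> SPX p0 X"
proof (cases "z = p0")
  case True then show ?thesis by (simp add: SPX_def span_zero)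
next
  case False
  assume "z \<in> X"
  then have "-p0 + z \<in> (\<lambda>x. -p0 + x) ` (X - {p0})" using False by auto
  then show ?thesis unfolding SPX_def by (metis span_base add.commute diff_conv_add_uminus)
qed

lemma basis_real_vec: "(Basis :: (real^'n) set) = range (\<lambda>i. axis i 1)"
  unfolding Basis_vec_def by auto

lemma xpart:
  fixes SP :: "((real^'n) \<times> (real^'n)) set"
  assumes "subspace SP" "\<forall>i. (axis i 1, 0) \<in> SP"
  shows "(w, 0) \<in> SP"
proof -
  have sub: "subspace {w. (w, 0::real^'n) \<in> SP}"
    unfolding subspace_def
  proof (intro conjI ballI allI)
    show "0 \<in> {w. (w, 0::real^'n) \<in> SP}" using subspace_0[OF assms(1)] by (simp add: zero_prod_def)
  next
    fix a b assume "a \<in> {w. (w, 0::real^'n) \<in> SP}" "b \<in> {w. (w, 0::real^'n) \<in> SP}"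
    then have "(a, 0) + (b, 0) \<in> SP" using subspace_add[OF assms(1)] by blast
    then show "a + b \<in> {w. (w, 0::real^'n) \<in> SP}" by simp
  next
    fix c :: real and a assume "a \<in> {w. (w, 0::real^'n) \<in> SP}"
    then have "c *\<^sub>R (a, 0) \<in> SP" using subspace_scale[OF assms(1)] by blast
    then show "c *\<^sub>R a \<in> {w. (w, 0::real^'n) \<in> SP}" by simp
  qed
  have "Basis \<subseteq> {w. (w, 0::real^'n) \<in> SP}"
  proof
    fix u :: "real^'n" assume "u \<in> Basis"
    then obtain i where "u = axis i 1" unfolding Basis_vec_def by auto
    then show "u \<in> {w. (w, 0::real^'n) \<in> SP}" using assms(2) by auto
  qed
  then have "span Basis \<subseteq> {w. (w, 0::real^'n) \<in> SP}" using sub by (rule span_minimal)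
  then show ?thesis by auto
qed

lemma hull_UNIV:
  fixes X :: "((real^'n) \<times> (real^'n)) set"
  assumes p0: "p0 \<in> X"
    and ax: "\<forall>i. (axis i 1, 0) \<in> SPX p0 X" and ay: "\<forall>i. (0, axis i 1) \<in> SPX p0 X"
  shows "affine hull X = UNIV"
proof -
  have "Basis \<subseteq> SPX p0 X"
  proof
    fix z :: "(real^'n) \<times> (real^'n)" assume "z \<in> Basis"
    then obtain u where "u \<in> (Basis :: (real^'n) set)" "z = (u, 0) \<or> z = (0, u)"
      unfolding Basis_prod_def by auto
    moreover from this obtain i where "u = axis i 1" unfolding Basis_vec_def by auto
    ultimately show "z \<in> SPX p0 X" using ax ay by auto
  qed
  then have "span Basis \<subseteq> SPX p0 X" unfolding SPX_def by (metis span_minimal subspace_span)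
  then have U: "SPX p0 X = UNIV" by auto
  have "affine hull X = (\<lambda>x. p0 + x) ` SPX p0 X"
    unfolding SPX_def by (rule affine_hull_span2[OF p0])
  also have "\<dots> = UNIV" unfolding U
    by (auto intro!: image_eqI[where x="_ - p0"])
  finally show ?thesis .
qed


lemma valid_hull:
  fixes P :: "('a::real_vector) set" and lhs rhs :: "'a \<Rightarrow> real"
  assumes lin: "linear (\<lambda>p. rhs p - lhs p)" and valid: "\<forall>p\<in>P. lhs p \<le> rhs p"
  shows "valid_ineq (convex hull P) lhs rhs"
proof -
  let ?h = "\<lambda>p. rhs p - lhs p"
  have add: "?h (a + b) = ?h a + ?h b" and sc: "?h (c *\<^sub>R a) = c * ?h a" for a b c
    using lin unfolding linear_iff by auto
  have cv: "convex {p. 0 \<le> ?h p}"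
  proof (rule convexI)
    fix a b :: 'a and u v :: real
    assume "a \<in> {p. 0 \<le> ?h p}" "b \<in> {p. 0 \<le> ?h p}" "0 \<le> u" "0 \<le> v" "u + v = 1"
    then have "0 \<le> u * ?h a + v * ?h b" by simp
    then show "u *\<^sub>R a + v *\<^sub>R b \<in> {p. 0 \<le> ?h p}"
      by (simp only: mem_Collect_eq add sc)
  qed
  have "P \<subseteq> {p. 0 \<le> ?h p}" using valid by auto
  then have "convex hull P \<subseteq> {p. 0 \<le> ?h p}" using cv by (rule hull_minimal)
  then show ?thesis unfolding valid_ineq_def by auto
qed

lemma facet_from:
  fixes P :: "('a::euclidean_space) set" and lhs rhs :: "'a \<Rightarrow> real"
  assumes lin: "linear (\<lambda>p. rhs p - lhs p)"
    and valid: "\<forall>p\<in>P. lhs p \<le> rhs p"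
    and full: "affine hull P = UNIV"
    and qn: "lhs q \<noteq> rhs q"
    and fq: "affine hull (insert q {p \<in> convex hull P. lhs p = rhs p}) = UNIV"
  shows "facet_defining (convex hull P) lhs rhs"
proof -
  let ?h = "\<lambda>p. rhs p - lhs p"
  let ?F = "{p \<in> convex hull P. lhs p = rhs p}"
  have add: "?h (a + b) = ?h a + ?h b" and sc: "?h (c *\<^sub>R a) = c * ?h a" for a b c
    using lin unfolding linear_iff by auto
  have sub: "subspace {p. ?h p = 0}"
    unfolding subspace_def
  proof (intro conjI ballI allI)
    show "0 \<in> {p. ?h p = 0}" using sc[of 0 0] by simp
  next
    fix a b assume "a \<in> {p. ?h p = 0}" "b \<in> {p. ?h p = 0}"
    then show "a + b \<in> {p. ?h p = 0}" by (simp only: mem_Collect_eq add)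
  next
    fix c :: real and a assume "a \<in> {p. ?h p = 0}"
    then show "c *\<^sub>R a \<in> {p. ?h p = 0}" by (simp only: mem_Collect_eq sc)
  qed
  have "?F \<subseteq> {p. ?h p = 0}" by auto
  then have "affine hull ?F \<subseteq> {p. ?h p = 0}"
    using subspace_imp_affine[OF sub] by (rule hull_minimal)
  then have qnot: "q \<notin> affine hull ?F" using qn by auto
  have "aff_dim (insert q ?F) = int DIM('a)" using fq aff_dim_eq_full by blast
  then have dF: "aff_dim ?F = int DIM('a) - 1" using aff_dim_insert[of q ?F] qnot by simp
  have dK: "aff_dim (convex hull P) = int DIM('a)"
    using full aff_dim_eq_full aff_dim_convex_hull by metis
  show ?thesis unfolding facet_defining_def
    using valid_hull[OF lin valid] dF dK by simp
qed

locale vsetting = params +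
  fixes \<iota> :: "nat \<Rightarrow> 'n::finite"
  assumes bij: "bij_betw \<iota> {1..T} (UNIV :: 'n set)"
begin

definition vecof :: "(nat \<Rightarrow> real) \<Rightarrow> real^'n" where
  "vecof f = (\<chi> i. f (inv_into {1..T} \<iota> i))"

definition pt :: "(nat \<Rightarrow> real) \<Rightarrow> (nat \<Rightarrow> real) \<Rightarrow> (real^'n) \<times> (real^'n)" where
  "pt f g = (vecof f, vecof g)"

lemma inj: "inj_on \<iota> {1..T}" using bij by (rule bij_betw_imp_inj_on)
lemma surj: "\<exists>k\<in>{1..T}. i = \<iota> k"
  using bij_betw_imp_surj_on[OF bij] by (metis UNIV_I imageE)

lemma vecof_nth: "k \<in> {1..T} \<Longrightarrow> vecof f $ \<iota> k = f k"
  unfolding vecof_def using inj by simp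

lemma vec_eqT: "(\<And>k. k \<in> {1..T} \<Longrightarrow> v $ \<iota> k = w $ \<iota> k) \<Longrightarrow> v = w"
  by (metis surj vec_eq_iff)

lemma vecof_cong: "(\<And>k. k \<in> {1..T} \<Longrightarrow> f k = g k) \<Longrightarrow> vecof f = vecof g"
  by (rule vec_eqT) (simp add: vecof_nth)

lemma vecof_diff: "vecof (\<lambda>j. f j - g j) = vecof f - vecof g"
  by (rule vec_eqT) (simp add: vecof_nth)
lemma vecof_add: "vecof (\<lambda>j. f j + g j) = vecof f + vecof g"
  by (rule vec_eqT) (simp add: vecof_nth)
lemma vecof_scale: "vecof (\<lambda>j. c * f j) = c *\<^sub>R vecof f"
  by (rule vec_eqT) (simp add: vecof_nth)
lemma vecof_zero: "vecof (\<lambda>j. 0) = 0"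
  by (rule vec_eqT) (simp add: vecof_nth)
lemma vecof_axis: "k \<in> {1..T} \<Longrightarrow> vecof (\<lambda>j. if j = k then 1 else 0) = axis (\<iota> k) 1"
  by (rule vec_eqT) (auto simp: vecof_nth axis_def inj_on_eq_iff[OF inj])

lemma xc_pt: "k \<in> {1..T} \<Longrightarrow> xc \<iota> (pt f g) k = f k"
  unfolding xc_def pt_def by (simp add: vecof_nth)
lemma yc_pt: "k \<in> {1..T} \<Longrightarrow> yc \<iota> (pt f g) k = g k"
  unfolding yc_def pt_def by (simp add: vecof_nth)

lemma pt_P: "feasF T L l Cb Cu V Vb f g \<Longrightarrow> pt f g \<in> Pset \<iota> T L l Cb Cu V Vb"
  unfolding Pset_iff by (rule feasF_cong[of _ f _ g]) (auto simp: xc_pt yc_pt)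

end

context vsetting begin

abbreviation "PP \<equiv> Pset \<iota> T L l Cb Cu V Vb"

definition p0 :: "(real^'n) \<times> (real^'n)" where
  "p0 = pt (\<lambda>j. Cb * ind 1 T j) (ind 1 T)"
definition qx :: "nat \<Rightarrow> (real^'n) \<times> (real^'n)" where
  "qx k = pt (\<lambda>j. (Cb - V * (if j = k then 1 else 0)) * ind 1 T j) (ind 1 T)"
definition Yv :: "((real^'n) \<times> (real^'n)) set \<Rightarrow> (nat \<Rightarrow> real) set" where
  "Yv X = {g. (0, vecof g) \<in> SPX p0 X}"

lemma prof_feas:
  fixes a b :: nat and \<phi> :: "nat \<Rightarrow> real"
  assumes ab: "1 \<le> a" "a \<le> b + 1" "b \<le> T"
    and mu: "a \<le> 1 \<or> b < a \<or> min T (a + L - 1) \<le> b"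
    and xin: "\<forall>j. a \<le> j \<and> j \<le> b \<longrightarrow> Cu \<le> \<phi> j \<and> \<phi> j \<le> Cb"
    and xa: "2 \<le> a \<Longrightarrow> a \<le> b \<Longrightarrow> \<phi> a \<le> Vb"
    and xb: "b < T \<Longrightarrow> a \<le> b \<Longrightarrow> \<phi> b \<le> Vb"
    and xr: "\<forall>j. a + 1 \<le> j \<and> j \<le> b \<longrightarrow> \<bar>\<phi> j - \<phi> (j - 1)\<bar> \<le> V"
  shows "feasF T L l Cb Cu V Vb (\<lambda>j. \<phi> j * ind a b j) (ind a b)"
proof (rule interval_feas[OF ab mu])
  show "\<forall>k. a \<le> k \<and> k \<le> b \<longrightarrow> Cu \<le> \<phi> k * ind a b k \<and> \<phi> k * ind a b k \<le> Cb"
    using xin by (simp add: ind_def)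
  show "\<forall>k. \<not> (a \<le> k \<and> k \<le> b) \<longrightarrow> \<phi> k * ind a b k = 0" by (simp add: ind_def)
  show "2 \<le> a \<Longrightarrow> a \<le> b \<Longrightarrow> \<phi> a * ind a b a \<le> Vb" using xa by (simp add: ind_def)
  show "b < T \<Longrightarrow> a \<le> b \<Longrightarrow> \<phi> b * ind a b b \<le> Vb" using xb by (simp add: ind_def)
  show "\<forall>k. a + 1 \<le> k \<and> k \<le> b \<longrightarrow> \<bar>\<phi> k * ind a b k - \<phi> (k - 1) * ind a b (k - 1)\<bar> \<le> V"
  proof (intro allI impI)
    fix k assume k: "a + 1 \<le> k \<and> k \<le> b"
    then have "ind a b k = 1" "ind a b (k - 1) = 1" by (auto simp: ind_def)
    then show "\<bar>\<phi> k * ind a b k - \<phi> (k - 1) * ind a b (k - 1)\<bar> \<le> V" using xr k by simp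
  qed
qed

lemma p0_P: "p0 \<in> PP"
  unfolding p0_def
  by (rule pt_P, rule prof_feas) (use T0 CbCu V0 in auto)

lemma qx_P: "k \<in> {1..T} \<Longrightarrow> qx k \<in> PP"
  unfolding qx_def
proof (rule pt_P, rule prof_feas)
  show "\<forall>j. 1 \<le> j \<and> j \<le> T \<longrightarrow> Cu \<le> Cb - V * (if j = k then 1 else 0) \<and> Cb - V * (if j = k then 1 else 0) \<le> Cb"
    using VbV CuVb V0 by auto
  show "\<forall>j. 1 + 1 \<le> j \<and> j \<le> T \<longrightarrow>
      \<bar>Cb - V * (if j = k then 1 else 0) - (Cb - V * (if j - 1 = k then 1 else 0))\<bar> \<le> V"
  proof (intro allI impI)
    fix j :: nat assume j: "1 + 1 \<le> j \<and> j \<le> T"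
    show "\<bar>Cb - V * (if j = k then 1 else 0) - (Cb - V * (if j - 1 = k then 1 else 0))\<bar> \<le> V"
    proof (cases "j = k")
      case True
      then have "j - 1 \<noteq> k" using j by auto
      then show ?thesis using True V0 by simp
    next
      case False
      then show ?thesis using V0 by (cases "j - 1 = k") simp_all
    qed
  qed
qed (use T0 in auto)

end

context vsetting begin

lemma SP_x:
  assumes "p0 \<in> X" "\<forall>k\<in>{1..T}. qx k \<in> X"
  shows "(axis i 1, 0) \<in> SPX p0 X"
proof -
  obtain k where k: "k \<in> {1..T}" "i = \<iota> k" using surj by blast
  have m: "qx k - p0 \<in> SPX p0 X" using SPX_mem assms k by blast
  have "vecof (\<lambda>j. (Cb - V * (if j = k then 1 else 0)) * ind 1 T j) - vecof (\<lambda>j. Cb * ind 1 T j)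
      = vecof (\<lambda>j. (- V) * (if j = k then 1 else 0))"
    unfolding vecof_diff[symmetric] by (rule vecof_cong) (auto simp: ind_def algebra_simps)
  also have "\<dots> = (- V) *\<^sub>R axis i 1" unfolding vecof_scale vecof_axis[OF k(1)] k(2) ..
  finally have "qx k - p0 = (- V) *\<^sub>R (axis i 1, 0)"
    unfolding qx_def p0_def pt_def by simp
  then have "(- 1 / V) *\<^sub>R (qx k - p0) = (axis i 1, 0)" using V0 by simp
  moreover have "(- 1 / V) *\<^sub>R (qx k - p0) \<in> SPX p0 X"
    using m unfolding SPX_def by (rule span_scale)
  ultimately show ?thesis by simp
qed

lemma Yv_pt:
  assumes "p0 \<in> X" "\<forall>k\<in>{1..T}. qx k \<in> X" "pt f g \<in> X"
  shows "(\<lambda>j. g j - ind 1 T j) \<in> Yv X"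
proof -
  have m: "pt f g - p0 \<in> SPX p0 X" using SPX_mem assms by blast
  have x: "(vecof f - vecof (\<lambda>j. Cb * ind 1 T j), 0) \<in> SPX p0 X"
    by (rule xpart) (use SP_x[OF assms(1,2)] in \<open>auto simp: SPX_def\<close>)
  have "(pt f g - p0) - (vecof f - vecof (\<lambda>j. Cb * ind 1 T j), 0) \<in> SPX p0 X"
    using m x unfolding SPX_def by (rule span_diff)
  moreover have "(pt f g - p0) - (vecof f - vecof (\<lambda>j. Cb * ind 1 T j), 0) = (0, vecof (\<lambda>j. g j - ind 1 T j))"
    unfolding pt_def p0_def vecof_diff by simp
  ultimately show ?thesis unfolding Yv_def by simp
qed

lemma Yv_diff: "f \<in> Yv X \<Longrightarrow> g \<in> Yv X \<Longrightarrow> (\<lambda>j. f j - g j) \<in> Yv X"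
proof -
  assume "f \<in> Yv X" "g \<in> Yv X"
  then have "(0, vecof f) - (0, vecof g) \<in> SPX p0 X" unfolding Yv_def SPX_def by (intro span_diff) auto
  then show ?thesis by (simp add: Yv_def vecof_diff)
qed

lemma Yv_add: "f \<in> Yv X \<Longrightarrow> g \<in> Yv X \<Longrightarrow> (\<lambda>j. f j + g j) \<in> Yv X"
proof -
  assume "f \<in> Yv X" "g \<in> Yv X"
  then have "(0, vecof f) + (0, vecof g) \<in> SPX p0 X" unfolding Yv_def SPX_def by (intro span_add) auto
  then show ?thesis by (simp add: Yv_def vecof_add)
qed

lemma Yv_zero: "(\<lambda>j. 0) \<in> Yv X"
  unfolding Yv_def SPX_def by (simp add: vecof_zero span_zero zero_prod_def[symmetric])

lemma Yv_cong:
  assumes "f \<in> Yv X" "\<And>j. j \<in> {1..T} \<Longrightarrow> f j = g j"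
  shows "g \<in> Yv X"
proof -
  have "vecof f = vecof g" using assms(2) by (rule vecof_cong)
  then show ?thesis using assms(1) by (simp add: Yv_def)
qed

lemma Yv_final:
  assumes "p0 \<in> X" "\<forall>k\<in>{1..T}. qx k \<in> X" "\<forall>k\<in>{1..T}. ind k T \<in> Yv X"
  shows "affine hull X = UNIV"
proof (rule hull_UNIV[OF assms(1)])
  show "\<forall>i. (axis i 1, 0) \<in> SPX p0 X" using SP_x[OF assms(1,2)] by blast
  show "\<forall>i. (0, axis i 1) \<in> SPX p0 X"
  proof
    fix i
    obtain k where k: "k \<in> {1..T}" "i = \<iota> k" using surj by blast
    have n: "ind (k + 1) T \<in> Yv X"
    proof (cases "k < T")
      case True then show ?thesis using assms(3) by auto
    next
      case False
      then have "k = T" using k by auto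
      then show ?thesis using Yv_zero by (rule_tac Yv_cong) (auto simp: ind_def)
    qed
    have "(\<lambda>j. ind k T j - ind (k + 1) T j) \<in> Yv X" using Yv_diff assms(3) k n by blast
    then have "(\<lambda>j. if j = k then 1 else 0) \<in> Yv X" by (rule Yv_cong) (auto simp: ind_def)
    then show "(0, axis i 1) \<in> SPX p0 X" using vecof_axis[OF k(1)] k(2) by (simp add: Yv_def)
  qed
qed

lemma Y_pre:
  assumes "p0 \<in> X" "\<forall>k\<in>{1..T}. qx k \<in> X" "pt f (ind 1 (k - 1)) \<in> X" "k \<in> {1..T}"
  shows "ind k T \<in> Yv X"
proof -
  have "(\<lambda>j. ind 1 (k - 1) j - ind 1 T j) \<in> Yv X" using Yv_pt assms by blast
  then have "(\<lambda>j. 0 - (ind 1 (k - 1) j - ind 1 T j)) \<in> Yv X" using Yv_zero Yv_diff by blast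
  then show ?thesis by (rule Yv_cong) (use assms(4) in \<open>auto simp: ind_def\<close>)
qed

lemma Y_suf:
  assumes "p0 \<in> X" "\<forall>k\<in>{1..T}. qx k \<in> X" "pt f (ind k T) \<in> X" "ind 1 T \<in> Yv X"
  shows "ind k T \<in> Yv X"
proof -
  have "(\<lambda>j. ind k T j - ind 1 T j) \<in> Yv X" using Yv_pt assms by blast
  then have "(\<lambda>j. (ind k T j - ind 1 T j) + ind 1 T j) \<in> Yv X" using assms(4) Yv_add by blast
  then show ?thesis by simp
qed

lemma Y_mid:
  assumes "p0 \<in> X" "\<forall>k\<in>{1..T}. qx k \<in> X" "pt f (ind a b) \<in> X" "ind 1 T \<in> Yv X"
    "1 \<le> a" "a \<le> b" "b < T"
  shows "ind a T \<in> Yv X \<longleftrightarrow> ind (b + 1) T \<in> Yv X"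
proof -
  have w: "(\<lambda>j. ind a b j - ind 1 T j) \<in> Yv X" using Yv_pt assms by blast
  have e: "ind a b j - ind 1 T j = ind a T j - ind (b + 1) T j - ind 1 T j" if "j \<in> {1..T}" for j
    using that assms(5-7) by (auto simp: ind_def)
  show ?thesis
  proof
    assume h: "ind a T \<in> Yv X"
    have "(\<lambda>j. (ind a T j - ind 1 T j) - (ind a b j - ind 1 T j)) \<in> Yv X"
      using Yv_diff[OF Yv_diff[OF h assms(4)] w] .
    then show "ind (b + 1) T \<in> Yv X"
    proof (rule Yv_cong)
      fix j assume "j \<in> {1..T}"
      from e[OF this] show "ind a T j - ind 1 T j - (ind a b j - ind 1 T j) = ind (b + 1) T j" by linarith
    qed
  next
    assume h: "ind (b + 1) T \<in> Yv X"
    have "(\<lambda>j. (ind a b j - ind 1 T j) + ind 1 T j + ind (b + 1) T j) \<in> Yv X"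
      using Yv_add[OF Yv_add[OF w assms(4)] h] .
    then show "ind a T \<in> Yv X"
    proof (rule Yv_cong)
      fix j assume "j \<in> {1..T}"
      from e[OF this] show "ind a b j - ind 1 T j + ind 1 T j + ind (b + 1) T j = ind a T j" by linarith
    qed
  qed
qed

end

lemma sum_single:
  fixes c D :: "nat \<Rightarrow> real"
  assumes "finite S" "s0 \<in> S" "D s0 = 1" "\<forall>s\<in>S. s \<noteq> s0 \<longrightarrow> D s = 0"
  shows "(\<Sum>s\<in>S. c s * D s) = c s0"
proof -
  have "(\<Sum>s\<in>S. c s * D s) = c s0 * D s0 + (\<Sum>s\<in>S - {s0}. c s * D s)"
    using assms(1,2) by (simp add: sum.remove)
  moreover have "(\<Sum>s\<in>S - {s0}. c s * D s) = 0" using assms(4) by (intro sum.neutral) auto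
  ultimately show ?thesis using assms(3) by simp
qed

lemma sum_zero:
  fixes c D :: "nat \<Rightarrow> real"
  assumes "\<forall>s\<in>S. D s = 0"
  shows "(\<Sum>s\<in>S. c s * D s) = 0"
  using assms by (intro sum.neutral) auto

context vsetting begin

definition R1 :: "nat set \<Rightarrow> real \<Rightarrow> nat \<Rightarrow> (nat \<Rightarrow> real) \<Rightarrow> real" where
  "R1 S \<eta> t y = (Cb - \<eta> * V) * y t + \<eta> * V * y (t + 1)
               - (\<Sum>s\<in>S. (Cb - Vb - real s * V) * (y (t - s) - y (t - s - 1)))"

definition R2 :: "nat set \<Rightarrow> real \<Rightarrow> nat \<Rightarrow> (nat \<Rightarrow> real) \<Rightarrow> real" where
  "R2 S \<eta> t y = (Cb - \<eta> * V) * y t + \<eta> * V * y (t - 1)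
               - (\<Sum>s\<in>S. (Cb - Vb - real s * V) * (y (t + s) - y (t + s + 1)))"

lemma yc_add: "yc \<iota> (a + b) = (\<lambda>k. yc \<iota> a k + yc \<iota> b k)" by (auto simp: yc_def)
lemma yc_scale: "yc \<iota> (c *\<^sub>R a) = (\<lambda>k. c * yc \<iota> a k)" by (auto simp: yc_def)
lemma xc_add: "xc \<iota> (a + b) t = xc \<iota> a t + xc \<iota> b t" by (auto simp: xc_def)
lemma xc_scale: "xc \<iota> (c *\<^sub>R a) t = c * xc \<iota> a t" by (auto simp: xc_def)

lemma R1_add: "R1 S \<eta> t (\<lambda>k. f k + g k) = R1 S \<eta> t f + R1 S \<eta> t g"
proof -
  have "(\<Sum>s\<in>S. (Cb - Vb - real s * V) * ((f (t - s) + g (t - s)) - (f (t - s - 1) + g (t - s - 1))))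
     = (\<Sum>s\<in>S. (Cb - Vb - real s * V) * (f (t - s) - f (t - s - 1)) + (Cb - Vb - real s * V) * (g (t - s) - g (t - s - 1)))"
    by (rule sum.cong) (simp_all add: algebra_simps)
  then show ?thesis unfolding R1_def sum.distrib by (simp add: algebra_simps)
qed
lemma R1_scale: "R1 S \<eta> t (\<lambda>k. c * f k) = c * R1 S \<eta> t f"
  unfolding R1_def by (simp add: sum_distrib_left algebra_simps)
lemma R2_add: "R2 S \<eta> t (\<lambda>k. f k + g k) = R2 S \<eta> t f + R2 S \<eta> t g"
proof -
  have "(\<Sum>s\<in>S. (Cb - Vb - real s * V) * ((f (t + s) + g (t + s)) - (f (t + s + 1) + g (t + s + 1))))
     = (\<Sum>s\<in>S. (Cb - Vb - real s * V) * (f (t + s) - f (t + s + 1)) + (Cb - Vb - real s * V) * (g (t + s) - g (t + s + 1)))"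
    by (rule sum.cong) (simp_all add: algebra_simps)
  then show ?thesis unfolding R2_def sum.distrib by (simp add: algebra_simps)
qed
lemma R2_scale: "R2 S \<eta> t (\<lambda>k. c * f k) = c * R2 S \<eta> t f"
  unfolding R2_def by (simp add: sum_distrib_left algebra_simps)

lemma lin1: "linear (\<lambda>p. R1 S \<eta> t (yc \<iota> p) - xc \<iota> p t)"
  by (rule linearI) (simp_all add: yc_add yc_scale xc_add xc_scale R1_add R1_scale algebra_simps)
lemma lin2: "linear (\<lambda>p. R2 S \<eta> t (yc \<iota> p) - xc \<iota> p t)"
  by (rule linearI) (simp_all add: yc_add yc_scale xc_add xc_scale R2_add R2_scale algebra_simps)

lemma R1_cong:
  assumes "\<forall>k\<in>{1..T}. y k = y' k" "1 \<le> t" "t + 1 \<le> T" "\<forall>s\<in>S. s + 2 \<le> t"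
  shows "R1 S \<eta> t y = R1 S \<eta> t y'"
proof -
  have e: "y k = y' k" if "1 \<le> k" "k \<le> T" for k using assms(1) that by auto
  have "(\<Sum>s\<in>S. (Cb - Vb - real s * V) * (y (t - s) - y (t - s - 1)))
      = (\<Sum>s\<in>S. (Cb - Vb - real s * V) * (y' (t - s) - y' (t - s - 1)))"
  proof (rule sum.cong)
    fix s assume "s \<in> S"
    then have "s + 2 \<le> t" using assms(4) by auto
    then show "(Cb - Vb - real s * V) * (y (t - s) - y (t - s - 1)) = (Cb - Vb - real s * V) * (y' (t - s) - y' (t - s - 1))"
      using e[of "t - s"] e[of "t - s - 1"] assms(3) by simp
  qed simp
  then show ?thesis unfolding R1_def using e[of t] e[of "t+1"] assms(2,3) by simp
qed

lemma R2_cong: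
  assumes "\<forall>k\<in>{1..T}. y k = y' k" "2 \<le> t" "t \<le> T" "\<forall>s\<in>S. t + s + 1 \<le> T"
  shows "R2 S \<eta> t y = R2 S \<eta> t y'"
proof -
  have e: "y k = y' k" if "1 \<le> k" "k \<le> T" for k using assms(1) that by auto
  have "(\<Sum>s\<in>S. (Cb - Vb - real s * V) * (y (t + s) - y (t + s + 1)))
      = (\<Sum>s\<in>S. (Cb - Vb - real s * V) * (y' (t + s) - y' (t + s + 1)))"
  proof (rule sum.cong)
    fix s assume "s \<in> S"
    then have "t + s + 1 \<le> T" using assms(4) by auto
    then show "(Cb - Vb - real s * V) * (y (t + s) - y (t + s + 1)) = (Cb - Vb - real s * V) * (y' (t + s) - y' (t + s + 1))"
      using e[of "t + s"] e[of "t + s + 1"] assms(2) by simp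
  qed simp
  then show ?thesis unfolding R2_def using e[of t] e[of "t - 1"] assms(2,3) by simp
qed

lemma const_P:
  assumes "1 \<le> a" "a \<le> b + 1" "b \<le> T" "a \<le> 1 \<or> b < a \<or> min T (a + L - 1) \<le> b"
    "Cu \<le> c" "c \<le> Cb" "(2 \<le> a \<or> b < T) \<Longrightarrow> c \<le> Vb"
  shows "pt (\<lambda>j. c * ind a b j) (ind a b) \<in> PP"
  by (rule pt_P, rule prof_feas) (use assms V0 in auto)

lemma full_dim: "affine hull PP = UNIV"
proof (rule Yv_final)
  show "p0 \<in> PP" by (rule p0_P)
  show "\<forall>k\<in>{1..T}. qx k \<in> PP" using qx_P by blast
  show "\<forall>k\<in>{1..T}. ind k T \<in> Yv PP"
  proof
    fix k assume k: "k \<in> {1..T}"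
    have "pt (\<lambda>j. Cu * ind 1 (k - 1) j) (ind 1 (k - 1)) \<in> PP"
      by (rule const_P) (use k CbCu CuVb in auto)
    then show "ind k T \<in> Yv PP" using Y_pre p0_P qx_P k by blast
  qed
qed

end

context vsetting begin

lemma ramp_up_P:
  assumes "2 \<le> k" "k \<le> T" "real m * V \<le> Cb - Vb"
  shows "pt (\<lambda>j. (Vb + real (min (j - k) m) * V) * ind k T j) (ind k T) \<in> PP"
proof (rule pt_P, rule prof_feas)
  show "\<forall>j. k \<le> j \<and> j \<le> T \<longrightarrow> Cu \<le> Vb + real (min (j - k) m) * V \<and> Vb + real (min (j - k) m) * V \<le> Cb"
  proof (intro allI impI conjI)
    fix j
    have "real (min (j - k) m) * V \<le> real m * V" using V0 by (intro mult_right_mono) auto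
    then show "Vb + real (min (j - k) m) * V \<le> Cb" using assms(3) by simp
    show "Cu \<le> Vb + real (min (j - k) m) * V" using CuVb V0 by (simp add: add_increasing2 less_imp_le)
  qed
  show "\<forall>j. k + 1 \<le> j \<and> j \<le> T \<longrightarrow> \<bar>Vb + real (min (j - k) m) * V - (Vb + real (min (j - 1 - k) m) * V)\<bar> \<le> V"
  proof (intro allI impI)
    fix j assume j: "k + 1 \<le> j \<and> j \<le> T"
    have "min (j - k) m = min (j - 1 - k) m \<or> min (j - k) m = min (j - 1 - k) m + 1" using j by auto
    then show "\<bar>Vb + real (min (j - k) m) * V - (Vb + real (min (j - 1 - k) m) * V)\<bar> \<le> V"
      using V0 by (auto simp: algebra_simps)
  qed
qed (use assms in auto)

lemma ramp_down_P:
  assumes "1 \<le> b" "b < T" "real m * V \<le> Cb - Vb"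
  shows "pt (\<lambda>j. (Vb + real (min (b - j) m) * V) * ind 1 b j) (ind 1 b) \<in> PP"
proof (rule pt_P, rule prof_feas)
  show "\<forall>j. 1 \<le> j \<and> j \<le> b \<longrightarrow> Cu \<le> Vb + real (min (b - j) m) * V \<and> Vb + real (min (b - j) m) * V \<le> Cb"
  proof (intro allI impI conjI)
    fix j
    have "real (min (b - j) m) * V \<le> real m * V" using V0 by (intro mult_right_mono) auto
    then show "Vb + real (min (b - j) m) * V \<le> Cb" using assms(3) by simp
    show "Cu \<le> Vb + real (min (b - j) m) * V" using CuVb V0 by (simp add: add_increasing2 less_imp_le)
  qed
  show "\<forall>j. 1 + 1 \<le> j \<and> j \<le> b \<longrightarrow> \<bar>Vb + real (min (b - j) m) * V - (Vb + real (min (b - (j - 1)) m) * V)\<bar> \<le> V"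
  proof (intro allI impI)
    fix j assume j: "1 + 1 \<le> j \<and> j \<le> b"
    have "min (b - (j - 1)) m = min (b - j) m \<or> min (b - (j - 1)) m = min (b - j) m + 1" using j by auto
    then show "\<bar>Vb + real (min (b - j) m) * V - (Vb + real (min (b - (j - 1)) m) * V)\<bar> \<le> V"
      using V0 by (auto simp: algebra_simps)
  qed
qed (use assms in auto)

end

locale fac1 = vsetting +
  fixes S :: "nat set" and \<eta> :: real and t :: nat
  assumes t1: "1 \<le> t" and tT: "t + 1 \<le> T"
    and St: "\<forall>s\<in>S. s + 2 \<le> t" and SL: "\<forall>s\<in>S. s + 1 \<le> L"
    and Sh: "\<forall>s\<in>S. real s \<le> (Cb - Vb) / V"
    and e0: "0 \<le> \<eta>" and eL: "\<eta> \<le> real L - 1" and eh: "\<eta> \<le> (Cb - Vb) / V"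
begin

definition F1set where "F1set = {p \<in> convex hull PP. xc \<iota> p t = R1 S \<eta> t (yc \<iota> p)}"
definition X1 where "X1 = insert (qx t) F1set"

lemma finS: "finite S" using SL by (intro finite_subset[of S "{..L}"]) auto

lemma sV: "s \<in> S \<Longrightarrow> real s * V \<le> Cb - Vb"
  using Sh V0 by (simp add: pos_le_divide_eq)

lemma valid: "\<forall>p\<in>PP. xc \<iota> p t \<le> R1 S \<eta> t (yc \<iota> p)"
proof
  fix p assume "p \<in> PP"
  then have F: "feasF T L l Cb Cu V Vb (xc \<iota> p) (yc \<iota> p)" by (simp add: Pset_iff)
  interpret sched T L l Cb Cu V Vb "xc \<iota> p" "yc \<iota> p" by unfold_locales (rule F)
  show "xc \<iota> p t \<le> R1 S \<eta> t (yc \<iota> p)"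
    unfolding R1_def by (rule valid1[OF t1 tT St SL Sh e0 eL eh])
qed

lemma inX: "pt f g \<in> PP \<Longrightarrow> f t = R1 S \<eta> t g \<Longrightarrow> pt f g \<in> X1"
proof -
  assume a: "pt f g \<in> PP" "f t = R1 S \<eta> t g"
  have "R1 S \<eta> t (yc \<iota> (pt f g)) = R1 S \<eta> t g"
    by (rule R1_cong) (use yc_pt t1 tT St in auto)
  moreover have "xc \<iota> (pt f g) t = f t" using xc_pt t1 tT by auto
  ultimately show ?thesis unfolding X1_def F1set_def using a hull_inc[of "pt f g" PP] by auto
qed

lemma R1_zero:
  assumes "\<forall>s\<in>S. y (t - s) = y (t - s - 1)"
  shows "R1 S \<eta> t y = (Cb - \<eta> * V) * y t + \<eta> * V * y (t + 1)"
proof -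
  have "(\<Sum>s\<in>S. (Cb - Vb - real s * V) * (y (t - s) - y (t - s - 1))) = 0"
    by (rule sum_zero) (use assms in auto)
  then show ?thesis unfolding R1_def by simp
qed

lemma R1_single:
  assumes "s0 \<in> S" "y (t - s0) = 1" "y (t - s0 - 1) = 0" "\<forall>s\<in>S. s \<noteq> s0 \<longrightarrow> y (t - s) = y (t - s - 1)"
  shows "R1 S \<eta> t y = (Cb - \<eta> * V) * y t + \<eta> * V * y (t + 1) - (Cb - Vb - real s0 * V)"
proof -
  have "(\<Sum>s\<in>S. (Cb - Vb - real s * V) * (y (t - s) - y (t - s - 1))) = Cb - Vb - real s0 * V"
    by (rule sum_single[OF finS assms(1)]) (use assms in auto)
  then show ?thesis unfolding R1_def by simp
qed

lemma R1_p0: "R1 S \<eta> t (ind 1 T) = Cb"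
proof -
  have "R1 S \<eta> t (ind 1 T) = (Cb - \<eta> * V) * ind 1 T t + \<eta> * V * ind 1 T (t + 1)"
    by (rule R1_zero) (use St t1 tT in \<open>auto simp: ind_def\<close>)
  then show ?thesis using t1 tT by (simp add: ind_def algebra_simps)
qed

lemma p0_X: "p0 \<in> X1"
  unfolding p0_def by (rule inX) (use p0_P R1_p0 t1 tT in \<open>auto simp: p0_def ind_def\<close>)

lemma qx_X: "k \<in> {1..T} \<Longrightarrow> qx k \<in> X1"
proof (cases "k = t")
  case True then show ?thesis by (simp add: X1_def)
next
  case False
  assume k: "k \<in> {1..T}"
  show ?thesis unfolding qx_def
    by (rule inX) (use qx_P[OF k] R1_p0 t1 tT False in \<open>auto simp: qx_def ind_def\<close>)
qed

lemma qx_all: "\<forall>k\<in>{1..T}. qx k \<in> X1" using qx_X by blast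

lemma qn: "xc \<iota> (qx t) t \<noteq> R1 S \<eta> t (yc \<iota> (qx t))"
proof -
  have "R1 S \<eta> t (yc \<iota> (qx t)) = R1 S \<eta> t (ind 1 T)"
    unfolding qx_def by (rule R1_cong) (use yc_pt t1 tT St in auto)
  moreover have "xc \<iota> (qx t) t = Cb - V" unfolding qx_def using xc_pt t1 tT by (auto simp: ind_def)
  ultimately show ?thesis using R1_p0 V0 by simp
qed

lemma Y_pre_case:
  assumes k: "k \<in> {1..t}" "t - k \<notin> S"
  shows "ind k T \<in> Yv X1"
proof -
  have P: "pt (\<lambda>j. Cu * ind 1 (k - 1) j) (ind 1 (k - 1)) \<in> PP"
    by (rule const_P) (use k tT CbCu CuVb in auto)
  have "R1 S \<eta> t (ind 1 (k - 1)) = (Cb - \<eta> * V) * ind 1 (k - 1) t + \<eta> * V * ind 1 (k - 1) (t + 1)"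
  proof (rule R1_zero, intro ballI)
    fix s assume s: "s \<in> S"
    then have "s \<noteq> t - k" "s + 2 \<le> t" using k St by auto
    then show "ind 1 (k - 1) (t - s) = ind 1 (k - 1) (t - s - 1)" using k by (auto simp: ind_def)
  qed
  moreover have i0: "ind 1 (k - 1) t = 0" "ind 1 (k - 1) (t + 1) = 0" using k by (auto simp: ind_def)
  ultimately have "R1 S \<eta> t (ind 1 (k - 1)) = 0" by simp
  then have "pt (\<lambda>j. Cu * ind 1 (k - 1) j) (ind 1 (k - 1)) \<in> X1"
    using inX[OF P] i0 by simp
  then show ?thesis using Y_pre[OF p0_X] qx_X k tT by auto
qed

lemma Y1: "ind 1 T \<in> Yv X1"
proof -
  have "t - 1 \<notin> S" using St by force
  then show ?thesis using Y_pre_case[of 1] t1 by auto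
qed

lemma Y_ramp_case:
  assumes k: "2 \<le> k" "k \<le> t" "t - k \<in> S"
  shows "ind k T \<in> Yv X1"
proof -
  let ?s = "t - k"
  have P: "pt (\<lambda>j. (Vb + real (min (j - k) ?s) * V) * ind k T j) (ind k T) \<in> PP"
    by (rule ramp_up_P) (use k tT sV[OF k(3)] in auto)
  have "R1 S \<eta> t (ind k T) = (Cb - \<eta> * V) * ind k T t + \<eta> * V * ind k T (t + 1) - (Cb - Vb - real ?s * V)"
  proof (rule R1_single[OF k(3)])
    show "ind k T (t - ?s) = 1" "ind k T (t - ?s - 1) = 0" using k tT by (auto simp: ind_def)
    show "\<forall>s\<in>S. s \<noteq> ?s \<longrightarrow> ind k T (t - s) = ind k T (t - s - 1)"
    proof (intro ballI impI)
      fix s assume s: "s \<in> S" "s \<noteq> ?s"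
      then have "s + 2 \<le> t" using St by auto
      then show "ind k T (t - s) = ind k T (t - s - 1)" using s k tT by (auto simp: ind_def)
    qed
  qed
  then have "R1 S \<eta> t (ind k T) = Vb + real ?s * V" using k tT by (simp add: ind_def algebra_simps)
  then have "pt (\<lambda>j. (Vb + real (min (j - k) ?s) * V) * ind k T j) (ind k T) \<in> X1"
    using inX[OF P] k tT by (simp add: ind_def)
  then show ?thesis using Y_suf[OF p0_X] qx_X Y1 by auto
qed

lemma Y_late_case:
  assumes k: "t + 2 \<le> k" "k \<le> T"
  shows "ind k T \<in> Yv X1"
proof -
  have P: "pt (\<lambda>j. Cu * ind k T j) (ind k T) \<in> PP"
    by (rule const_P) (use k CbCu CuVb in auto)
  have "R1 S \<eta> t (ind k T) = (Cb - \<eta> * V) * ind k T t + \<eta> * V * ind k T (t + 1)"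
    by (rule R1_zero) (use k in \<open>auto simp: ind_def\<close>)
  then have "R1 S \<eta> t (ind k T) = 0" using k by (simp add: ind_def)
  then have "pt (\<lambda>j. Cu * ind k T j) (ind k T) \<in> X1"
    using inX[OF P] k by (simp add: ind_def)
  then show ?thesis using Y_suf[OF p0_X] qx_X Y1 by auto
qed

lemma Y_le_t: "k \<in> {1..t} \<Longrightarrow> ind k T \<in> Yv X1"
proof -
  assume k: "k \<in> {1..t}"
  show ?thesis
  proof (cases "t - k \<in> S")
    case True
    then have "k \<noteq> 1" using St by force
    then show ?thesis using Y_ramp_case[OF _ _ True] k by auto
  next
    case False then show ?thesis using Y_pre_case k by auto
  qed
qed

lemma Y_special:
  assumes "\<eta> = 0 \<or> \<eta> = (Cb - Vb) / V \<or> (\<eta> = real L - 1 \<and> L - 1 \<in> S)"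
  shows "ind (t + 1) T \<in> Yv X1"
proof -
  consider (a) "\<eta> = 0" | (b) "\<eta> = (Cb - Vb) / V" | (c) "\<eta> = real L - 1" "L - 1 \<in> S"
    using assms by blast
  then show ?thesis
  proof cases
    case a
    have P: "pt (\<lambda>j. Cu * ind (t + 1) T j) (ind (t + 1) T) \<in> PP"
      by (rule const_P) (use tT CbCu CuVb t1 in auto)
    have "R1 S \<eta> t (ind (t + 1) T) = (Cb - \<eta> * V) * ind (t + 1) T t + \<eta> * V * ind (t + 1) T (t + 1)"
      by (rule R1_zero) (use t1 in \<open>auto simp: ind_def\<close>)
    then have "R1 S \<eta> t (ind (t + 1) T) = 0" using a by (simp add: ind_def)
    then have "pt (\<lambda>j. Cu * ind (t + 1) T j) (ind (t + 1) T) \<in> X1"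
      using inX[OF P] by (simp add: ind_def)
    then show ?thesis using Y_suf[OF p0_X] qx_X Y1 by auto
  next
    case b
    have P: "pt (\<lambda>j. Vb * ind 1 t j) (ind 1 t) \<in> PP"
      by (rule const_P) (use tT CbCu CuVb t1 VbV V0 in auto)
    have "R1 S \<eta> t (ind 1 t) = (Cb - \<eta> * V) * ind 1 t t + \<eta> * V * ind 1 t (t + 1)"
      by (rule R1_zero) (use t1 St in \<open>auto simp: ind_def\<close>)
    then have "R1 S \<eta> t (ind 1 t) = Vb" using b t1 V0 by (simp add: ind_def)
    then have "pt (\<lambda>j. Vb * ind 1 (t + 1 - 1) j) (ind 1 (t + 1 - 1)) \<in> X1"
      using inX[OF P] t1 by (simp add: ind_def)
    then show ?thesis using Y_pre[OF p0_X] qx_X t1 tT by auto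
  next
    case c
    define s0 where "s0 = L - 1"
    have s0: "s0 \<in> S" "s0 + 2 \<le> t" "s0 + 1 = L" using c St L0 unfolding s0_def by auto
    have P: "pt (\<lambda>j. Vb * ind (t - s0) t j) (ind (t - s0) t) \<in> PP"
      by (rule const_P) (use s0 tT CbCu CuVb t1 VbV V0 in auto)
    have "R1 S \<eta> t (ind (t - s0) t) = (Cb - \<eta> * V) * ind (t - s0) t t + \<eta> * V * ind (t - s0) t (t + 1) - (Cb - Vb - real s0 * V)"
    proof (rule R1_single[OF s0(1)])
      show "ind (t - s0) t (t - s0) = 1" "ind (t - s0) t (t - s0 - 1) = 0" using s0 by (auto simp: ind_def)
      show "\<forall>s\<in>S. s \<noteq> s0 \<longrightarrow> ind (t - s0) t (t - s) = ind (t - s0) t (t - s - 1)"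
      proof (intro ballI impI)
        fix s assume s: "s \<in> S" "s \<noteq> s0"
        then have "s + 1 \<le> L" "s + 2 \<le> t" using SL St by auto
        then show "ind (t - s0) t (t - s) = ind (t - s0) t (t - s - 1)" using s s0 by (auto simp: ind_def)
      qed
    qed
    moreover have "\<eta> = real s0" using c s0 by simp
    ultimately have "R1 S \<eta> t (ind (t - s0) t) = Vb" by (simp add: ind_def algebra_simps)
    then have "pt (\<lambda>j. Vb * ind (t - s0) t j) (ind (t - s0) t) \<in> X1"
      using inX[OF P] by (simp add: ind_def)
    moreover have "ind (t - s0) T \<in> Yv X1" using Y_le_t s0 by auto
    ultimately show ?thesis using Y_mid[OF p0_X qx_all] Y1 s0 tT by auto
  qed
qed

theorem facet1:
  assumes "\<eta> = 0 \<or> \<eta> = (Cb - Vb) / V \<or> (\<eta> = real L - 1 \<and> L - 1 \<in> S)"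
  shows "facet_defining (convex hull PP) (\<lambda>p. xc \<iota> p t) (\<lambda>p. R1 S \<eta> t (yc \<iota> p))"
proof (rule facet_from[OF lin1 valid full_dim qn])
  show "affine hull insert (qx t) {p \<in> convex hull PP. xc \<iota> p t = R1 S \<eta> t (yc \<iota> p)} = UNIV"
    unfolding F1set_def[symmetric] X1_def[symmetric]
  proof (rule Yv_final[OF p0_X])
    show "\<forall>k\<in>{1..T}. qx k \<in> X1" using qx_X by blast
    show "\<forall>k\<in>{1..T}. ind k T \<in> Yv X1"
    proof
      fix k assume k: "k \<in> {1..T}"
      consider "k \<le> t" | "k = t + 1" | "t + 2 \<le> k" by linarith
      then show "ind k T \<in> Yv X1"
      proof cases
        case 1 then show ?thesis using Y_le_t k by auto
      next
        case 2 then show ?thesis using Y_special[OF assms] by simp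
      next
        case 3 then show ?thesis using Y_late_case k by auto
      qed
    qed
  qed
qed

end

locale fac2 = vsetting +
  fixes S :: "nat set" and \<eta> :: real and t :: nat
  assumes t2: "2 \<le> t" and tT: "t \<le> T"
    and St: "\<forall>s\<in>S. t + s + 1 \<le> T" and SL: "\<forall>s\<in>S. s + 1 \<le> L"
    and Sh: "\<forall>s\<in>S. real s \<le> (Cb - Vb) / V"
    and e0: "0 \<le> \<eta>" and eL: "\<eta> \<le> real L - 1" and eh: "\<eta> \<le> (Cb - Vb) / V"
begin

definition F2set where "F2set = {p \<in> convex hull PP. xc \<iota> p t = R2 S \<eta> t (yc \<iota> p)}"
definition X2 where "X2 = insert (qx t) F2set"

lemma finS: "finite S" using SL by (intro finite_subset[of S "{..L}"]) auto

lemma sV: "s \<in> S \<Longrightarrow> real s * V \<le> Cb - Vb"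
  using Sh V0 by (simp add: pos_le_divide_eq)

lemma valid: "\<forall>p\<in>PP. xc \<iota> p t \<le> R2 S \<eta> t (yc \<iota> p)"
proof
  fix p assume "p \<in> PP"
  then have F: "feasF T L l Cb Cu V Vb (xc \<iota> p) (yc \<iota> p)" by (simp add: Pset_iff)
  interpret sched T L l Cb Cu V Vb "xc \<iota> p" "yc \<iota> p" by unfold_locales (rule F)
  show "xc \<iota> p t \<le> R2 S \<eta> t (yc \<iota> p)"
    unfolding R2_def by (rule valid2[OF t2 tT St SL Sh e0 eL eh])
qed

lemma inX: "pt f g \<in> PP \<Longrightarrow> f t = R2 S \<eta> t g \<Longrightarrow> pt f g \<in> X2"
proof -
  assume a: "pt f g \<in> PP" "f t = R2 S \<eta> t g"
  have "R2 S \<eta> t (yc \<iota> (pt f g)) = R2 S \<eta> t g"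
    by (rule R2_cong) (use yc_pt t2 tT St in auto)
  moreover have "xc \<iota> (pt f g) t = f t" using xc_pt t2 tT by auto
  ultimately show ?thesis unfolding X2_def F2set_def using a hull_inc[of "pt f g" PP] by auto
qed

lemma R2_zero:
  assumes "\<forall>s\<in>S. y (t + s) = y (t + s + 1)"
  shows "R2 S \<eta> t y = (Cb - \<eta> * V) * y t + \<eta> * V * y (t - 1)"
proof -
  have "(\<Sum>s\<in>S. (Cb - Vb - real s * V) * (y (t + s) - y (t + s + 1))) = 0"
    by (rule sum_zero) (use assms in auto)
  then show ?thesis unfolding R2_def by simp
qed

lemma R2_single:
  assumes "s0 \<in> S" "y (t + s0) = 1" "y (t + s0 + 1) = 0" "\<forall>s\<in>S. s \<noteq> s0 \<longrightarrow> y (t + s) = y (t + s + 1)"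
  shows "R2 S \<eta> t y = (Cb - \<eta> * V) * y t + \<eta> * V * y (t - 1) - (Cb - Vb - real s0 * V)"
proof -
  have "(\<Sum>s\<in>S. (Cb - Vb - real s * V) * (y (t + s) - y (t + s + 1))) = Cb - Vb - real s0 * V"
    by (rule sum_single[OF finS assms(1)]) (use assms in auto)
  then show ?thesis unfolding R2_def by simp
qed

lemma R2_p0: "R2 S \<eta> t (ind 1 T) = Cb"
proof -
  have "R2 S \<eta> t (ind 1 T) = (Cb - \<eta> * V) * ind 1 T t + \<eta> * V * ind 1 T (t - 1)"
    by (rule R2_zero) (use St t2 tT in \<open>auto simp: ind_def\<close>)
  moreover have "ind 1 T t = 1" "ind 1 T (t - 1) = 1" using t2 tT by (auto simp: ind_def)
  ultimately show ?thesis by (simp add: algebra_simps)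
qed

lemma p0_X: "p0 \<in> X2"
  unfolding p0_def by (rule inX) (use p0_P R2_p0 t2 tT in \<open>auto simp: p0_def ind_def\<close>)

lemma qx_X: "k \<in> {1..T} \<Longrightarrow> qx k \<in> X2"
proof (cases "k = t")
  case True then show ?thesis by (simp add: X2_def)
next
  case False
  assume k: "k \<in> {1..T}"
  show ?thesis unfolding qx_def
    by (rule inX) (use qx_P[OF k] R2_p0 t2 tT False in \<open>auto simp: qx_def ind_def\<close>)
qed

lemma qx_all: "\<forall>k\<in>{1..T}. qx k \<in> X2" using qx_X by blast

lemma qn: "xc \<iota> (qx t) t \<noteq> R2 S \<eta> t (yc \<iota> (qx t))"
proof -
  have "R2 S \<eta> t (yc \<iota> (qx t)) = R2 S \<eta> t (ind 1 T)"
    unfolding qx_def by (rule R2_cong) (use yc_pt t2 tT St in auto)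
  moreover have "xc \<iota> (qx t) t = Cb - V" unfolding qx_def using xc_pt t2 tT by (auto simp: ind_def)
  ultimately show ?thesis using R2_p0 V0 by simp
qed

lemma Y_pre_case:
  assumes k: "1 \<le> k" "k + 1 \<le> t"
  shows "ind k T \<in> Yv X2"
proof -
  have P: "pt (\<lambda>j. Cu * ind 1 (k - 1) j) (ind 1 (k - 1)) \<in> PP"
    by (rule const_P) (use k tT CbCu CuVb in auto)
  have "R2 S \<eta> t (ind 1 (k - 1)) = (Cb - \<eta> * V) * ind 1 (k - 1) t + \<eta> * V * ind 1 (k - 1) (t - 1)"
    by (rule R2_zero) (use k in \<open>auto simp: ind_def\<close>)
  moreover have i0: "ind 1 (k - 1) t = 0" "ind 1 (k - 1) (t - 1) = 0" using k by (auto simp: ind_def)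
  ultimately have "R2 S \<eta> t (ind 1 (k - 1)) = 0" by simp
  then have "pt (\<lambda>j. Cu * ind 1 (k - 1) j) (ind 1 (k - 1)) \<in> X2"
    using inX[OF P] i0 by simp
  then show ?thesis using Y_pre[OF p0_X qx_all] k tT by auto
qed

lemma Y1: "ind 1 T \<in> Yv X2"
  using Y_pre_case[of 1] t2 by auto

lemma Y_late_case:
  assumes k: "t + 1 \<le> k" "k \<le> T"
  shows "ind k T \<in> Yv X2"
proof (cases "k - t - 1 \<in> S")
  case True
  define s0 where "s0 = k - t - 1"
  define b where "b = k - 1"
  have s0: "s0 \<in> S" "b = t + s0" "b < T" "1 \<le> b" using True k t2 St unfolding s0_def b_def by auto
  have P: "pt (\<lambda>j. (Vb + real (min (b - j) s0) * V) * ind 1 b j) (ind 1 b) \<in> PP"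
    by (rule ramp_down_P) (use s0 sV[OF s0(1)] in auto)
  have "R2 S \<eta> t (ind 1 b) = (Cb - \<eta> * V) * ind 1 b t + \<eta> * V * ind 1 b (t - 1) - (Cb - Vb - real s0 * V)"
  proof (rule R2_single[OF s0(1)])
    show "ind 1 b (t + s0) = 1" "ind 1 b (t + s0 + 1) = 0" using s0 t2 by (auto simp: ind_def)
    show "\<forall>s\<in>S. s \<noteq> s0 \<longrightarrow> ind 1 b (t + s) = ind 1 b (t + s + 1)"
      using s0 t2 by (auto simp: ind_def)
  qed
  moreover have "ind 1 b t = 1" "ind 1 b (t - 1) = 1" using s0 t2 by (auto simp: ind_def)
  ultimately have "R2 S \<eta> t (ind 1 b) = Vb + real s0 * V" by (simp add: algebra_simps)
  moreover have "(Vb + real (min (b - t) s0) * V) * ind 1 b t = Vb + real s0 * V"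
    using s0 t2 by (simp add: ind_def)
  ultimately have "pt (\<lambda>j. (Vb + real (min (b - j) s0) * V) * ind 1 b j) (ind 1 (k - 1)) \<in> X2"
    using inX[OF P] unfolding b_def by simp
  then show ?thesis using Y_pre[OF p0_X qx_all] k t2 by auto
next
  case False
  have P: "pt (\<lambda>j. Cu * ind k T j) (ind k T) \<in> PP"
    by (rule const_P) (use k t2 CbCu CuVb in auto)
  have "R2 S \<eta> t (ind k T) = (Cb - \<eta> * V) * ind k T t + \<eta> * V * ind k T (t - 1)"
  proof (rule R2_zero, intro ballI)
    fix s assume "s \<in> S"
    then have "s \<noteq> k - t - 1" "t + s + 1 \<le> T" using False St by auto
    then show "ind k T (t + s) = ind k T (t + s + 1)" using k by (auto simp: ind_def)
  qed
  moreover have i0: "ind k T t = 0" "ind k T (t - 1) = 0" using k by (auto simp: ind_def)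
  ultimately have "R2 S \<eta> t (ind k T) = 0" by simp
  then have "pt (\<lambda>j. Cu * ind k T j) (ind k T) \<in> X2"
    using inX[OF P] i0 by simp
  then show ?thesis using Y_suf[OF p0_X qx_all] Y1 by auto
qed

lemma Y_special:
  assumes "\<eta> = 0 \<or> \<eta> = (Cb - Vb) / V \<or> (\<eta> = real L - 1 \<and> L - 1 \<in> S)"
  shows "ind t T \<in> Yv X2"
proof -
  consider (a) "\<eta> = 0" | (b) "\<eta> = (Cb - Vb) / V" | (c) "\<eta> = real L - 1" "L - 1 \<in> S"
    using assms by blast
  then show ?thesis
  proof cases
    case a
    have P: "pt (\<lambda>j. Cu * ind 1 (t - 1) j) (ind 1 (t - 1)) \<in> PP"
      by (rule const_P) (use tT CbCu CuVb t2 in auto)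
    have "R2 S \<eta> t (ind 1 (t - 1)) = (Cb - \<eta> * V) * ind 1 (t - 1) t + \<eta> * V * ind 1 (t - 1) (t - 1)"
      by (rule R2_zero) (use t2 in \<open>auto simp: ind_def\<close>)
    moreover have i0: "ind 1 (t - 1) t = 0" using t2 by (auto simp: ind_def)
    ultimately have "R2 S \<eta> t (ind 1 (t - 1)) = 0" using a by simp
    then have "pt (\<lambda>j. Cu * ind 1 (t - 1) j) (ind 1 (t - 1)) \<in> X2"
      using inX[OF P] i0 by simp
    then show ?thesis using Y_pre[OF p0_X qx_all] t2 tT by auto
  next
    case b
    have P: "pt (\<lambda>j. Vb * ind t T j) (ind t T) \<in> PP"
      by (rule const_P) (use tT CbCu CuVb t2 VbV V0 in auto)
    have "R2 S \<eta> t (ind t T) = (Cb - \<eta> * V) * ind t T t + \<eta> * V * ind t T (t - 1)"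
      by (rule R2_zero) (use t2 St in \<open>auto simp: ind_def\<close>)
    moreover have i0: "ind t T t = 1" "ind t T (t - 1) = 0" using t2 tT by (auto simp: ind_def)
    ultimately have "R2 S \<eta> t (ind t T) = Vb" using b V0 by simp
    then have "pt (\<lambda>j. Vb * ind t T j) (ind t T) \<in> X2"
      using inX[OF P] i0 by simp
    then show ?thesis using Y_suf[OF p0_X qx_all] Y1 by auto
  next
    case c
    define s0 where "s0 = L - 1"
    have s0: "s0 \<in> S" "t + s0 + 1 \<le> T" "s0 + 1 = L" using c St L0 unfolding s0_def by auto
    have P: "pt (\<lambda>j. Vb * ind t (t + s0) j) (ind t (t + s0)) \<in> PP"
      by (rule const_P) (use s0 tT CbCu CuVb t2 VbV V0 in auto)
    have "R2 S \<eta> t (ind t (t + s0)) = (Cb - \<eta> * V) * ind t (t + s0) t + \<eta> * V * ind t (t + s0) (t - 1) - (Cb - Vb - real s0 * V)"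
    proof (rule R2_single[OF s0(1)])
      show "ind t (t + s0) (t + s0) = 1" "ind t (t + s0) (t + s0 + 1) = 0" by (auto simp: ind_def)
      show "\<forall>s\<in>S. s \<noteq> s0 \<longrightarrow> ind t (t + s0) (t + s) = ind t (t + s0) (t + s + 1)"
      proof (intro ballI impI)
        fix s assume s: "s \<in> S" "s \<noteq> s0"
        then have "s + 1 \<le> L" using SL by auto
        then show "ind t (t + s0) (t + s) = ind t (t + s0) (t + s + 1)" using s s0 by (auto simp: ind_def)
      qed
    qed
    moreover have i0: "ind t (t + s0) t = 1" "ind t (t + s0) (t - 1) = 0" using t2 by (auto simp: ind_def)
    moreover have "\<eta> = real s0" using c s0 by simp
    ultimately have "R2 S \<eta> t (ind t (t + s0)) = Vb" by (simp add: algebra_simps)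
    then have "pt (\<lambda>j. Vb * ind t (t + s0) j) (ind t (t + s0)) \<in> X2"
      using inX[OF P] i0 by simp
    moreover have "ind (t + s0 + 1) T \<in> Yv X2" using Y_late_case s0 by auto
    ultimately show ?thesis using Y_mid[OF p0_X qx_all] Y1 s0 t2 by auto
  qed
qed

theorem facet2:
  assumes "\<eta> = 0 \<or> \<eta> = (Cb - Vb) / V \<or> (\<eta> = real L - 1 \<and> L - 1 \<in> S)"
  shows "facet_defining (convex hull PP) (\<lambda>p. xc \<iota> p t) (\<lambda>p. R2 S \<eta> t (yc \<iota> p))"
proof (rule facet_from[OF lin2 valid full_dim qn])
  show "affine hull insert (qx t) {p \<in> convex hull PP. xc \<iota> p t = R2 S \<eta> t (yc \<iota> p)} = UNIV"
    unfolding F2set_def[symmetric] X2_def[symmetric]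
  proof (rule Yv_final[OF p0_X qx_all])
    show "\<forall>k\<in>{1..T}. ind k T \<in> Yv X2"
    proof
      fix k assume k: "k \<in> {1..T}"
      consider "k + 1 \<le> t" | "k = t" | "t + 1 \<le> k" by linarith
      then show "ind k T \<in> Yv X2"
      proof cases
        case 1 then show ?thesis using Y_pre_case k by auto
      next
        case 2 then show ?thesis using Y_special[OF assms] by simp
      next
        case 3 then show ?thesis using Y_late_case k by auto
      qed
    qed
  qed
qed

end

theorem proposition3:
  fixes \<iota> :: "nat \<Rightarrow> 'n::finite"
    and T L l :: nat
    and Cbar Cund V Vbar \<eta> :: real
    and S :: "nat set"
  assumes "T > 0" and "L > 0" and "l > 0"
    and "Cbar > Cund" and "Cund > 0" and "V > 0" and "Vbar + V \<le> Cbar"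
    and "Cund < Vbar" and "Vbar < Cund + V"
    and "bij_betw \<iota> {1..T} (UNIV :: 'n set)"
    and "\<forall>s\<in>S. int s \<le> int L - 1 \<and> int s \<le> int T - 3 \<and> int s \<le> \<lfloor>(Cbar - Vbar) / V\<rfloor>"
    and "0 \<le> \<eta>" and "\<eta> \<le> real L - 1" and "\<eta> \<le> (Cbar - Vbar) / V"
  shows
    "(\<forall>t\<in>{1..T - 1}. (\<forall>s\<in>S. t \<ge> s + 2) \<longrightarrow>
        valid_ineq (convex hull (Pset \<iota> T L l Cbar Cund V Vbar))
          (\<lambda>p. xc \<iota> p t)
          (\<lambda>p. (Cbar - \<eta> * V) * yc \<iota> p t + \<eta> * V * yc \<iota> p (t + 1)
               - (\<Sum>s\<in>S. (Cbar - Vbar - real s * V) * (yc \<iota> p (t - s) - yc \<iota> p (t - s - 1))))) \<and>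
     (\<forall>t\<in>{2..T}. (\<forall>s\<in>S. t + s + 1 \<le> T) \<longrightarrow>
        valid_ineq (convex hull (Pset \<iota> T L l Cbar Cund V Vbar))
          (\<lambda>p. xc \<iota> p t)
          (\<lambda>p. (Cbar - \<eta> * V) * yc \<iota> p t + \<eta> * V * yc \<iota> p (t - 1)
               - (\<Sum>s\<in>S. (Cbar - Vbar - real s * V) * (yc \<iota> p (t + s) - yc \<iota> p (t + s + 1))))) \<and>
     ((\<eta> = 0 \<or> \<eta> = (Cbar - Vbar) / V \<or> (\<eta> = real L - 1 \<and> L - 1 \<in> S)) \<longrightarrow>
       (\<forall>t\<in>{1..T - 1}. (\<forall>s\<in>S. t \<ge> s + 2) \<longrightarrow>
        facet_defining (convex hull (Pset \<iota> T L l Cbar Cund V Vbar))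
          (\<lambda>p. xc \<iota> p t)
          (\<lambda>p. (Cbar - \<eta> * V) * yc \<iota> p t + \<eta> * V * yc \<iota> p (t + 1)
               - (\<Sum>s\<in>S. (Cbar - Vbar - real s * V) * (yc \<iota> p (t - s) - yc \<iota> p (t - s - 1))))) \<and>
       (\<forall>t\<in>{2..T}. (\<forall>s\<in>S. t + s + 1 \<le> T) \<longrightarrow>
        facet_defining (convex hull (Pset \<iota> T L l Cbar Cund V Vbar))
          (\<lambda>p. xc \<iota> p t)
          (\<lambda>p. (Cbar - \<eta> * V) * yc \<iota> p t + \<eta> * V * yc \<iota> p (t - 1)
               - (\<Sum>s\<in>S. (Cbar - Vbar - real s * V) * (yc \<iota> p (t + s) - yc \<iota> p (t + s + 1))))))"
proof -
  note a = assms
  interpret vsetting T L l Cbar Cund V Vbar \<iota>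
    by unfold_locales (use a in auto)
  have SL: "\<forall>s\<in>S. s + 1 \<le> L" using a(11) by force
  have Sh: "\<forall>s\<in>S. real s \<le> (Cbar - Vbar) / V"
  proof
    fix s assume "s \<in> S"
    then have "int s \<le> \<lfloor>(Cbar - Vbar) / V\<rfloor>" using a(11) by blast
    then have "real_of_int (int s) \<le> (Cbar - Vbar) / V" by (simp only: le_floor_iff)
    then show "real s \<le> (Cbar - Vbar) / V" by simp
  qed
  have P1: "valid_ineq (convex hull PP) (\<lambda>p. xc \<iota> p t) (\<lambda>p. R1 S \<eta> t (yc \<iota> p))
         \<and> ((\<eta> = 0 \<or> \<eta> = (Cbar - Vbar) / V \<or> (\<eta> = real L - 1 \<and> L - 1 \<in> S)) \<longrightarrow>
           facet_defining (convex hull PP) (\<lambda>p. xc \<iota> p t) (\<lambda>p. R1 S \<eta> t (yc \<iota> p)))"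
    if t: "t \<in> {1..T - 1}" "\<forall>s\<in>S. t \<ge> s + 2" for t
  proof -
    interpret fac1 T L l Cbar Cund V Vbar \<iota> S \<eta> t
      by unfold_locales (use t SL Sh a in auto)
    show ?thesis using valid_hull[OF lin1 valid] facet1 by blast
  qed
  have P2: "valid_ineq (convex hull PP) (\<lambda>p. xc \<iota> p t) (\<lambda>p. R2 S \<eta> t (yc \<iota> p))
         \<and> ((\<eta> = 0 \<or> \<eta> = (Cbar - Vbar) / V \<or> (\<eta> = real L - 1 \<and> L - 1 \<in> S)) \<longrightarrow>
           facet_defining (convex hull PP) (\<lambda>p. xc \<iota> p t) (\<lambda>p. R2 S \<eta> t (yc \<iota> p)))"
    if t: "t \<in> {2..T}" "\<forall>s\<in>S. t + s + 1 \<le> T" for t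
  proof -
    interpret fac2 T L l Cbar Cund V Vbar \<iota> S \<eta> t
      by unfold_locales (use t SL Sh a in auto)
    show ?thesis using valid_hull[OF lin2 valid] facet2 by blast
  qed
  show ?thesis using P1 P2 unfolding R1_def R2_def by blast
qed


end
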